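(* Let $G$ be a finite simple graph on $[d]$. Then: (a) for $I\in\{\langle [I_G]_2\rangle, J_G, L_G\}$, $I$ is a prime ideal if and only if $I=I_G$; (b) $I_G=\langle [I_G]_2\rangle$ if and only if $I_G$ is generated by quadratic binomials; (c) $\langle [I_G]_2\rangle=J_G$ if and only if the complement graph $\overline{G}$ has no $3$-cycle; (d) $J_G=L_G$ if and only if $G$ is a complete multipartite graph on a vertex partition $V_1\sqcup\cdots\sqcup V_t$ with $|V_j|\le 3$ for every $j$.
   Context: A stable set of $G$ is a subset of $[d]$ with no edge of $G$ (including $\emptyset$ and singletons); $S(G)$ is the set of stable sets; $R[G]=\mathbb{K}[x_S : S\in S(G)]$ over a field $\mathbb{K}$, all variables of degree $1$. $I_G$ is the kernel of $\pi:R[G]\to\mathbb{K}[t_1,\dots,t_d,s]$, $\pi(x_S)=s\prod_{j\in S}t_j$ (a binomial $\prod x_{S_i}-\prod x_{T_i}$ of equal degree lies in $I_G$ iff the multiset unions of the $S_i$ and of the $T_i$ coincide). $\langle [I_G]_2\rangle$ is the ideal generated by the degree-$2$ homogeneous elements of $I_G$. $J_G$ is the ideal generated by all $x_{S_1}x_{S_2}-x_{S_3}x_{S_4}$ with $S_i\in S(G)$, $S_1\cap S_2=S_3\cap S_4=\emptyset$, $S_1\cup S_2=S_3\cup S_4$. $L_G=\langle x_{S\setminus\{i\}}x_{\{i\}}-x_Sx_\emptyset : i\in S\in S(G),\ |S|\ge2\rangle$. By convention, "$I_G$ is generated by quadratic binomials" includes the case $I_G=\{0\}$. A complete multipartite graph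 on $V_1\sqcup\dots\sqcup V_t$ has an edge between two vertices iff they lie in different parts. *)

theory Defs
  imports "HOL-Library.Poly_Mapping" "HOL-Library.Disjoint_Sets"
begin

definition simple_graph_on :: "nat \<Rightarrow> nat set set \<Rightarrow> bool" where
  "simple_graph_on d E \<longleftrightarrow>
     (\<forall>e\<in>E. \<exists>i j. e = {i, j} \<and> i \<noteq> j \<and> i \<in> {1..d} \<and> j \<in> {1..d})"

definition stable_sets :: "nat \<Rightarrow> nat set set \<Rightarrow> nat set set" where
  "stable_sets d E = {S. S \<subseteq> {1..d} \<and> (\<forall>e\<in>E. \<not> e \<subseteq> S)}"

definition complement_has_triangle :: "nat \<Rightarrow> nat set set \<Rightarrow> bool" where
  "complement_has_triangle d E \<longleftrightarrow>
     (\<exists>a b c. a \<in> {1..d} \<and> b \<in> {1..d} \<and> c \<in> {1..d} \<and> a \<noteq> b \<and> b \<noteq> c \<and> a \<noteq> c \<and>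
              {a, b} \<notin> E \<and> {b, c} \<notin> E \<and> {a, c} \<notin> E)"

definition complete_multipartite_wrt :: "nat \<Rightarrow> nat set set \<Rightarrow> nat set set \<Rightarrow> bool" where
  "complete_multipartite_wrt d E P \<longleftrightarrow> partition_on {1..d} P \<and>
     (\<forall>i\<in>{1..d}. \<forall>j\<in>{1..d}. i \<noteq> j \<longrightarrow>
        ({i, j} \<in> E \<longleftrightarrow> \<not> (\<exists>V\<in>P. i \<in> V \<and> j \<in> V)))"

type_synonym ('v, 'k) mpoly = "('v \<Rightarrow>\<^sub>0 nat) \<Rightarrow>\<^sub>0 'k"

definition var :: "'v \<Rightarrow> ('v, 'k::{zero,one}) mpoly" where
  "var v = Poly_Mapping.single (Poly_Mapping.single v 1) 1"

definition monom_deg :: "('v \<Rightarrow>\<^sub>0 nat) \<Rightarrow> nat" where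
  "monom_deg m = (\<Sum>v\<in>Poly_Mapping.keys m. Poly_Mapping.lookup m v)"

definition homogeneous_of_deg :: "nat \<Rightarrow> ('v, 'k::zero) mpoly \<Rightarrow> bool" where
  "homogeneous_of_deg n p \<longleftrightarrow> (\<forall>m\<in>Poly_Mapping.keys p. monom_deg m = n)"

definition poly_ring :: "'v set \<Rightarrow> ('v, 'k::zero) mpoly set" where
  "poly_ring V = {p. \<forall>m\<in>Poly_Mapping.keys p. Poly_Mapping.keys m \<subseteq> V}"

definition ideal_gen :: "'a::comm_ring_1 set \<Rightarrow> 'a set \<Rightarrow> 'a set" where
  "ideal_gen R B = {p. \<exists>F r. finite F \<and> F \<subseteq> B \<and> (\<forall>g\<in>F. r g \<in> R) \<and> p = (\<Sum>g\<in>F. r g * g)}"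

definition is_ideal_in :: "'a::comm_ring_1 set \<Rightarrow> 'a set \<Rightarrow> bool" where
  "is_ideal_in R I \<longleftrightarrow> I \<subseteq> R \<and> 0 \<in> I \<and> (\<forall>a\<in>I. \<forall>b\<in>I. a + b \<in> I) \<and>
     (\<forall>r\<in>R. \<forall>a\<in>I. r * a \<in> I)"

definition prime_ideal_in :: "'a::comm_ring_1 set \<Rightarrow> 'a set \<Rightarrow> bool" where
  "prime_ideal_in R I \<longleftrightarrow> is_ideal_in R I \<and> I \<noteq> R \<and>
     (\<forall>a\<in>R. \<forall>b\<in>R. a * b \<in> I \<longrightarrow> a \<in> I \<or> b \<in> I)"

text \<open>Variables x_S are indexed by the stable set S itself.\<close>
definition RG :: "nat \<Rightarrow> nat set set \<Rightarrow> (nat set, 'k::zero) mpoly set" where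
  "RG d E = poly_ring (stable_sets d E)"

text \<open>Target ring K[t_1,...,t_d,s]: variable Some j is t_j, variable None is s.
  Image of a monomial prod x_S^(a_S) under x_S |-> s * prod_{j in S} t_j.\<close>
definition mono_img :: "(nat set \<Rightarrow>\<^sub>0 nat) \<Rightarrow> (nat option \<Rightarrow>\<^sub>0 nat)" where
  "mono_img m = (\<Sum>S\<in>Poly_Mapping.keys m. Poly_Mapping.single None (Poly_Mapping.lookup m S) +
                              (\<Sum>j\<in>S. Poly_Mapping.single (Some j) (Poly_Mapping.lookup m S)))"

definition piG :: "(nat set, 'k::comm_ring_1) mpoly \<Rightarrow> (nat option, 'k) mpoly" where
  "piG p = (\<Sum>m\<in>Poly_Mapping.keys p. Poly_Mapping.single (mono_img m) (Poly_Mapping.lookup p m))"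

definition IG :: "nat \<Rightarrow> nat set set \<Rightarrow> (nat set, 'k::comm_ring_1) mpoly set" where
  "IG d E = {p \<in> RG d E. piG p = 0}"

definition IG2 :: "nat \<Rightarrow> nat set set \<Rightarrow> (nat set, 'k::comm_ring_1) mpoly set" where
  "IG2 d E = ideal_gen (RG d E) {p \<in> IG d E. homogeneous_of_deg 2 p}"

definition JG :: "nat \<Rightarrow> nat set set \<Rightarrow> (nat set, 'k::comm_ring_1) mpoly set" where
  "JG d E = ideal_gen (RG d E)
     {var S1 * var S2 - var S3 * var S4 | S1 S2 S3 S4.
        S1 \<in> stable_sets d E \<and> S2 \<in> stable_sets d E \<and> S3 \<in> stable_sets d E \<and> S4 \<in> stable_sets d E \<and>
        S1 \<inter> S2 = {} \<and> S3 \<inter> S4 = {} \<and> S1 \<union> S2 = S3 \<union> S4}"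

definition LG :: "nat \<Rightarrow> nat set set \<Rightarrow> (nat set, 'k::comm_ring_1) mpoly set" where
  "LG d E = ideal_gen (RG d E)
     {var (S - {i}) * var {i} - var S * var {} | i S.
        S \<in> stable_sets d E \<and> i \<in> S \<and> card S \<ge> 2}"

definition quadratic_binomials :: "nat \<Rightarrow> nat set set \<Rightarrow> (nat set, 'k::comm_ring_1) mpoly set" where
  "quadratic_binomials d E =
     {var S1 * var S2 - var S3 * var S4 | S1 S2 S3 S4.
        S1 \<in> stable_sets d E \<and> S2 \<in> stable_sets d E \<and> S3 \<in> stable_sets d E \<and> S4 \<in> stable_sets d E}"

definition generated_by_quadratic_binomials :: "nat \<Rightarrow> nat set set \<Rightarrow> (nat set, 'k::comm_ring_1) mpoly set \<Rightarrow> bool" where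
  "generated_by_quadratic_binomials d E I \<longleftrightarrow>
     (\<exists>B \<subseteq> quadratic_binomials d E. I = ideal_gen (RG d E) B)"

end

theory Submission
  imports Defs "HOL-Library.Option_ord"
begin


definition mon :: "('v \<Rightarrow>\<^sub>0 nat) \<Rightarrow> ('v, 'k::{zero,one}) mpoly" where
  "mon m = Poly_Mapping.single m 1"

definition push :: "('a \<Rightarrow> 'b) \<Rightarrow> ('a \<Rightarrow>\<^sub>0 'c::comm_monoid_add) \<Rightarrow> ('b \<Rightarrow>\<^sub>0 'c)" where
  "push f p = (\<Sum>m\<in>Poly_Mapping.keys p. Poly_Mapping.single (f m) (Poly_Mapping.lookup p m))"

lemma push_superset:
  assumes "finite A" "Poly_Mapping.keys p \<subseteq> A"
  shows "push f p = (\<Sum>m\<in>A. Poly_Mapping.single (f m) (Poly_Mapping.lookup p m))"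
  unfolding push_def
  by (rule sum.mono_neutral_left) (use assms in \<open>auto simp: in_keys_iff\<close>)

lemma push_add: "push f (p + q) = push f p + push f q"
proof -
  let ?A = "Poly_Mapping.keys p \<union> Poly_Mapping.keys q"
  have "push f (p + q) = (\<Sum>m\<in>?A. Poly_Mapping.single (f m) (Poly_Mapping.lookup (p+q) m))"
    by (rule push_superset) (auto dest: set_mp[OF keys_add])
  also have "\<dots> = (\<Sum>m\<in>?A. Poly_Mapping.single (f m) (Poly_Mapping.lookup p m))
      + (\<Sum>m\<in>?A. Poly_Mapping.single (f m) (Poly_Mapping.lookup q m))"
    by (simp add: lookup_add single_add sum.distrib)
  also have "\<dots> = push f p + push f q"
    by (subst (1 2) push_superset[of ?A]) auto
  finally show ?thesis .
qed

lemma push_zero [simp]: "push f 0 = 0"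
  by (simp add: push_def)

lemma push_single [simp]: "push f (Poly_Mapping.single m c) = Poly_Mapping.single (f m) c"
  by (simp add: push_def)

lemma push_sum: "push f (sum g A) = (\<Sum>a\<in>A. push f (g a))"
  by (induction A rule: infinite_finite_induct) (auto simp: push_add)

lemma push_uminus: "push f (- (p::'a \<Rightarrow>\<^sub>0 'c::ab_group_add)) = - push f p"
proof -
  have "push f (- p) + push f p = 0" by (simp flip: push_add)
  then show ?thesis by (simp add: eq_neg_iff_add_eq_0)
qed

lemma push_diff: "push f ((p::'a \<Rightarrow>\<^sub>0 'c::ab_group_add) - q) = push f p - push f q"
  using push_add[of f p "-q"] push_uminus[of f q] by simp

lemma push_id: "push id p = p"
proof (rule poly_mapping_eqI)
  fix k
  have "Poly_Mapping.lookup (push id p) k = (\<Sum>m\<in>Poly_Mapping.keys p. (Poly_Mapping.lookup p m when m = k))"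
    by (simp add: push_def lookup_sum lookup_single)
  also have "\<dots> = Poly_Mapping.lookup p k"
    by (cases "k \<in> Poly_Mapping.keys p") (auto simp: when_def in_keys_iff sum.delta)
  finally show "Poly_Mapping.lookup (push id p) k = Poly_Mapping.lookup p k" .
qed

lemma poly_expand: "p = (\<Sum>m\<in>Poly_Mapping.keys p. Poly_Mapping.single m (Poly_Mapping.lookup p m))"
  using push_id[of p] by (simp add: push_def)

lemma push_comp: "push f (push g p) = push (f \<circ> g) p"
  by (simp add: push_def[of g] push_sum) (simp add: push_def)

lemma lookup_push: "Poly_Mapping.lookup (push f p) u = (\<Sum>m\<in>{m\<in>Poly_Mapping.keys p. f m = u}. Poly_Mapping.lookup p m)"
  by (simp add: push_def lookup_sum lookup_single when_def sum.inter_filter)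

lemma push_mult:
  fixes p q :: "'a::comm_monoid_add \<Rightarrow>\<^sub>0 'c::comm_semiring_1"
  assumes hom: "\<And>a b. f (a + b) = f a + f b"
  shows "push f (p * q) = push f p * push f q"
proof -
  have "p * q = (\<Sum>a\<in>Poly_Mapping.keys p. \<Sum>b\<in>Poly_Mapping.keys q.
      Poly_Mapping.single (a + b) (Poly_Mapping.lookup p a * Poly_Mapping.lookup q b))"
    apply (subst (1) poly_expand[of p], subst (1) poly_expand[of q])
    by (simp add: sum_product mult_single)
  then have "push f (p * q) = (\<Sum>a\<in>Poly_Mapping.keys p. \<Sum>b\<in>Poly_Mapping.keys q.
      Poly_Mapping.single (f a + f b) (Poly_Mapping.lookup p a * Poly_Mapping.lookup q b))"
    by (simp add: push_sum hom)
  also have "\<dots> = push f p * push f q"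
    by (simp add: push_def sum_product mult_single)
  finally show ?thesis .
qed

lemma mon_mult: "mon a * mon b = (mon (a + b) :: ('v, 'k::comm_semiring_1) mpoly)"
  by (simp add: mon_def mult_single)

lemma mon_zero: "mon 0 = (1 :: ('v, 'k::comm_semiring_1) mpoly)"
  by (simp add: mon_def)

lemma var_mon: "var v = mon (Poly_Mapping.single v 1)"
  by (simp add: var_def mon_def)

lemma var_power: "(var v :: ('v, 'k::comm_semiring_1) mpoly) ^ n = mon (Poly_Mapping.single v n)"
  by (induction n) (auto simp: mon_zero var_mon mon_mult single_add[symmetric])

lemma keysum_add:
  fixes h :: "'a \<Rightarrow> 'b::comm_monoid_add \<Rightarrow> 'c::comm_monoid_add"
  assumes "\<And>v. h v 0 = 0" "\<And>v a b. h v (a + b) = h v a + h v b"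
  shows "(\<Sum>v\<in>Poly_Mapping.keys (p + q). h v (Poly_Mapping.lookup (p + q) v)) =
    (\<Sum>v\<in>Poly_Mapping.keys p. h v (Poly_Mapping.lookup p v)) + (\<Sum>v\<in>Poly_Mapping.keys q. h v (Poly_Mapping.lookup q v))"
  by (rule setsum_keys_plus_distrib) (use assms in auto)

lemma keysum_single:
  fixes h :: "'a \<Rightarrow> 'b::comm_monoid_add \<Rightarrow> 'c::comm_monoid_add"
  assumes "\<And>v. h v 0 = 0"
  shows "(\<Sum>v\<in>Poly_Mapping.keys (Poly_Mapping.single x k). h v (Poly_Mapping.lookup (Poly_Mapping.single x k) v)) = h x k"
  using assms by simp

lemma monom_deg_add: "monom_deg (a + b) = monom_deg a + monom_deg b"
  unfolding monom_deg_def by (rule keysum_add[where h="\<lambda>v k. k"]) auto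

lemma monom_deg_single [simp]: "monom_deg (Poly_Mapping.single v k) = k"
  unfolding monom_deg_def by simp

lemma monom_deg_zero [simp]: "monom_deg 0 = 0"
  unfolding monom_deg_def by simp

lemma monom_deg_eq_0: "monom_deg m = 0 \<Longrightarrow> m = 0"
  unfolding monom_deg_def
  by (metis finite_keys in_keys_iff keys_eq_empty sum_eq_0_iff equals0I)

lemma mono_img_add: "mono_img (a + b) = mono_img a + mono_img b"
  unfolding mono_img_def
  by (rule keysum_add) (simp_all add: single_add sum.distrib ac_simps)

lemma mono_img_single: "mono_img (Poly_Mapping.single S k) =
   Poly_Mapping.single None k + (\<Sum>j\<in>S. Poly_Mapping.single (Some j) k)"
  unfolding mono_img_def by (cases "k = 0") simp_all

lemma mono_img_zero [simp]: "mono_img 0 = 0"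
  unfolding mono_img_def by simp

lemma piG_push: "piG = push mono_img"
  by (simp add: fun_eq_iff piG_def push_def)

lemma piG_add: "piG (p + q) = piG p + piG q"
  by (simp add: piG_push push_add)
lemma piG_diff: "piG (p - q) = piG p - piG q"
  by (simp add: piG_push push_diff)
lemma piG_uminus: "piG (- p) = - piG p"
  by (simp add: piG_push push_uminus)
lemma piG_mult: "piG (p * q) = piG p * piG q"
  by (simp add: piG_push push_mult mono_img_add)
lemma piG_mon: "piG (mon m) = mon (mono_img m)"
  by (simp add: piG_push mon_def)



definition subring :: "'a::comm_ring_1 set \<Rightarrow> bool" where
  "subring R \<longleftrightarrow> 0 \<in> R \<and> 1 \<in> R \<and> (\<forall>a\<in>R. \<forall>b\<in>R. a + b \<in> R \<and> a * b \<in> R) \<and> (\<forall>a\<in>R. - a \<in> R)"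

definition closed_ideal :: "'a::comm_ring_1 set \<Rightarrow> 'a set \<Rightarrow> bool" where
  "closed_ideal R I \<longleftrightarrow> 0 \<in> I \<and> (\<forall>a\<in>I. \<forall>b\<in>I. a + b \<in> I) \<and> (\<forall>r\<in>R. \<forall>a\<in>I. r * a \<in> I)"

lemma ig_gen:
  assumes "subring R" "g \<in> B" shows "g \<in> ideal_gen R B"
  unfolding ideal_gen_def
  by (rule CollectI, rule exI[of _ "{g}"], rule exI[of _ "\<lambda>_. 1"]) (use assms in \<open>auto simp: subring_def\<close>)

lemma ig_zero: "0 \<in> ideal_gen R B"
  unfolding ideal_gen_def by (rule CollectI, rule exI[of _ "{}"]) auto

lemma ig_add:
  assumes R: "subring R" and p: "p \<in> ideal_gen R B" and q: "q \<in> ideal_gen R B"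
  shows "p + q \<in> ideal_gen R B"
proof -
  obtain F1 r1 where F1: "finite F1" "F1 \<subseteq> B" "\<forall>g\<in>F1. r1 g \<in> R" "p = (\<Sum>g\<in>F1. r1 g * g)"
    using p unfolding ideal_gen_def by blast
  obtain F2 r2 where F2: "finite F2" "F2 \<subseteq> B" "\<forall>g\<in>F2. r2 g \<in> R" "q = (\<Sum>g\<in>F2. r2 g * g)"
    using q unfolding ideal_gen_def by blast
  define s1 where "s1 g = (if g \<in> F1 then r1 g else 0)" for g
  define s2 where "s2 g = (if g \<in> F2 then r2 g else 0)" for g
  have "p = (\<Sum>g\<in>F1 \<union> F2. s1 g * g)"
    unfolding F1(4) s1_def by (rule sum.mono_neutral_cong_left) (use F1 F2 in auto)
  moreover have "q = (\<Sum>g\<in>F1 \<union> F2. s2 g * g)"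
    unfolding F2(4) s2_def by (rule sum.mono_neutral_cong_left) (use F1 F2 in auto)
  ultimately have "p + q = (\<Sum>g\<in>F1 \<union> F2. (s1 g + s2 g) * g)"
    by (simp add: sum.distrib distrib_right)
  moreover have "\<forall>g\<in>F1 \<union> F2. s1 g + s2 g \<in> R"
    using F1 F2 R unfolding s1_def s2_def subring_def by auto
  ultimately show ?thesis
    unfolding ideal_gen_def
    by (intro CollectI exI[of _ "F1 \<union> F2"] exI[of _ "\<lambda>g. s1 g + s2 g"]) (use F1 F2 in auto)
qed

lemma ig_mult:
  assumes R: "subring R" and r: "r \<in> R" and p: "p \<in> ideal_gen R B"
  shows "r * p \<in> ideal_gen R B"
proof -
  obtain F1 r1 where F1: "finite F1" "F1 \<subseteq> B" "\<forall>g\<in>F1. r1 g \<in> R" "p = (\<Sum>g\<in>F1. r1 g * g)"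
    using p unfolding ideal_gen_def by blast
  have "r * p = (\<Sum>g\<in>F1. (r * r1 g) * g)"
    by (simp add: F1(4) sum_distrib_left mult.assoc)
  moreover have "\<forall>g\<in>F1. r * r1 g \<in> R" using F1 R r unfolding subring_def by auto
  ultimately show ?thesis unfolding ideal_gen_def
    by (intro CollectI exI[of _ F1] exI[of _ "\<lambda>g. r * r1 g"]) (use F1 in auto)
qed

lemma ig_uminus:
  assumes R: "subring R" and p: "p \<in> ideal_gen R B"
  shows "- p \<in> ideal_gen R B"
  using ig_mult[OF R _ p, of "-1"] R unfolding subring_def by auto

lemma ig_diff:
  assumes R: "subring R" and p: "p \<in> ideal_gen R B" and q: "q \<in> ideal_gen R B"
  shows "p - q \<in> ideal_gen R B"
  using ig_add[OF R p ig_uminus[OF R q]] by simp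

lemma ig_closed: "subring R \<Longrightarrow> closed_ideal R (ideal_gen R B)"
  unfolding closed_ideal_def using ig_zero ig_add ig_mult by blast

lemma closed_sum:
  assumes "closed_ideal R I" "\<forall>a\<in>A. f a \<in> I" shows "sum f A \<in> I"
  using assms(2)
  by (induction A rule: infinite_finite_induct) (use assms(1) in \<open>auto simp: closed_ideal_def\<close>)

lemma ig_min:
  assumes I: "closed_ideal R I" and B: "B \<subseteq> I"
  shows "ideal_gen R B \<subseteq> I"
proof
  fix p assume "p \<in> ideal_gen R B"
  then obtain F r where F: "finite F" "F \<subseteq> B" "\<forall>g\<in>F. r g \<in> R" "p = (\<Sum>g\<in>F. r g * g)"
    unfolding ideal_gen_def by blast
  show "p \<in> I" unfolding F(4)
    by (rule closed_sum[OF I]) (use I F B in \<open>auto simp: closed_ideal_def\<close>)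
qed

lemma ig_mono:
  assumes "subring R" "B \<subseteq> ideal_gen R C" shows "ideal_gen R B \<subseteq> ideal_gen R C"
  using ig_min[OF ig_closed[OF assms(1)] assms(2)] .

lemma ig_subset:
  assumes "subring R" "B \<subseteq> R" shows "ideal_gen R B \<subseteq> R"
  by (rule ig_min) (use assms in \<open>auto simp: closed_ideal_def subring_def\<close>)

lemma ig_lookup_zero:
  assumes "p \<in> ideal_gen R B" "\<And>g r. g \<in> B \<Longrightarrow> Poly_Mapping.lookup (r * g) M0 = 0"
  shows "Poly_Mapping.lookup p M0 = 0"
proof -
  obtain F r where F: "finite F" "F \<subseteq> B" "\<forall>g\<in>F. r g \<in> R" "p = (\<Sum>g\<in>F. r g * g)"
    using assms(1) unfolding ideal_gen_def by blast
  show ?thesis unfolding F(4) lookup_sum using F(2) assms(2) by (auto intro: sum.neutral)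
qed

lemma poly_ring_add: "a \<in> poly_ring V \<Longrightarrow> b \<in> poly_ring V \<Longrightarrow> a + b \<in> poly_ring V"
  unfolding poly_ring_def using keys_add[of a b] by blast

lemma poly_ring_mult:
  assumes a: "(a :: ('v, 'k::comm_ring_1) mpoly) \<in> poly_ring V" and b: "b \<in> poly_ring V"
  shows "a * b \<in> poly_ring V"
  unfolding poly_ring_def
proof (intro CollectI ballI)
  fix m assume "m \<in> Poly_Mapping.keys (a * b)"
  then obtain x y where "m = x + y" "x \<in> Poly_Mapping.keys a" "y \<in> Poly_Mapping.keys b"
    using keys_mult[of a b] by blast
  then show "Poly_Mapping.keys m \<subseteq> V" using a b keys_add[of x y] unfolding poly_ring_def by blast
qed

lemma poly_ring_subring: "subring (poly_ring V :: ('v, 'k::comm_ring_1) mpoly set)"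
proof -
  have "0 \<in> (poly_ring V :: ('v, 'k) mpoly set)" "1 \<in> (poly_ring V :: ('v, 'k) mpoly set)"
    "\<forall>a\<in>(poly_ring V :: ('v, 'k) mpoly set). - a \<in> poly_ring V"
    by (auto simp: poly_ring_def)
  then show ?thesis unfolding subring_def using poly_ring_add poly_ring_mult by blast
qed

lemma mon_in_poly_ring: "Poly_Mapping.keys m \<subseteq> V \<Longrightarrow> (mon m :: ('v, 'k::comm_ring_1) mpoly) \<in> poly_ring V"
  by (simp add: poly_ring_def mon_def)

lemma const_in_poly_ring: "(Poly_Mapping.single 0 c :: ('v, 'k::comm_ring_1) mpoly) \<in> poly_ring V"
  by (simp add: poly_ring_def)

lemma RG_subring: "subring (RG d E :: (nat set, 'k::comm_ring_1) mpoly set)"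
  unfolding RG_def by (rule poly_ring_subring)

lemma var_RG: "S \<in> stable_sets d E \<Longrightarrow> (var S :: (nat set, 'k::comm_ring_1) mpoly) \<in> RG d E"
  unfolding RG_def var_mon by (rule mon_in_poly_ring) simp

lemma ig_RG: "B \<subseteq> RG d E \<Longrightarrow> ideal_gen (RG d E) B \<subseteq> RG d E"
  by (rule ig_subset[OF RG_subring])

section \<open>I_G is an ideal\<close>

lemma IG_closed: "closed_ideal (RG d E) (IG d E :: (nat set, 'k::comm_ring_1) mpoly set)"
proof -
  have "piG (0 :: (nat set, 'k) mpoly) = 0" by (simp add: piG_def)
  then show ?thesis
  unfolding closed_ideal_def IG_def using RG_subring[of d E]
  by (auto simp: piG_add piG_mult subring_def simp del: piG_def)
qed

lemma IG_ideal: "is_ideal_in (RG d E) (IG d E :: (nat set, 'k::comm_ring_1) mpoly set)"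
  using IG_closed[of d E] unfolding is_ideal_in_def closed_ideal_def IG_def by auto

lemma piG_one: "piG (1 :: (nat set, 'k::comm_ring_1) mpoly) = 1"
  using piG_mon[of 0] by (simp add: mon_zero)

lemma IG_prime: "prime_ideal_in (RG d E) (IG d E :: (nat set, 'k::field) mpoly set)"
  unfolding prime_ideal_in_def
proof (intro conjI ballI impI)
  show "is_ideal_in (RG d E) (IG d E :: (nat set, 'k) mpoly set)" by (rule IG_ideal)
  have "(1 :: (nat set, 'k) mpoly) \<in> RG d E" using RG_subring unfolding subring_def by blast
  moreover have "(1 :: (nat set, 'k) mpoly) \<notin> IG d E" by (simp add: IG_def piG_one)
  ultimately show "IG d E \<noteq> (RG d E :: (nat set, 'k) mpoly set)" by blast
  fix a b :: "(nat set, 'k) mpoly"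
  assume "a \<in> RG d E" "b \<in> RG d E" "a * b \<in> IG d E"
  then show "a \<in> IG d E \<or> b \<in> IG d E" by (simp add: IG_def piG_mult)
qed



lemma stable_subset: "S \<in> stable_sets d E \<Longrightarrow> T \<subseteq> S \<Longrightarrow> T \<in> stable_sets d E"
  unfolding stable_sets_def by blast

lemma stable_finite: "S \<in> stable_sets d E \<Longrightarrow> finite S"
  unfolding stable_sets_def using finite_subset by blast

lemma stable_empty: assumes "simple_graph_on d E" shows "{} \<in> stable_sets d E"
  using assms unfolding stable_sets_def simple_graph_on_def by fastforce

lemma stable_sub_range: "S \<in> stable_sets d E \<Longrightarrow> S \<subseteq> {1..d}"
  unfolding stable_sets_def by blast

lemma stable_singleton:
  assumes "simple_graph_on d E" "j \<in> {1..d}" shows "{j} \<in> stable_sets d E"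
  using assms unfolding stable_sets_def simple_graph_on_def by (auto simp: doubleton_eq_iff)

lemma var_mult_var: "var S1 * var S2 = (mon (Poly_Mapping.single S1 1 + Poly_Mapping.single S2 1) :: ('v,'k::comm_ring_1) mpoly)"
  by (simp add: var_mon mon_mult)

lemma homog_binom:
  "homogeneous_of_deg 2 ((var S1 * var S2 - var S3 * var S4) :: ('v,'k::comm_ring_1) mpoly)"
proof -
  let ?a = "Poly_Mapping.single S1 1 + Poly_Mapping.single S2 1"
  let ?b = "Poly_Mapping.single S3 1 + Poly_Mapping.single S4 1"
  have k: "Poly_Mapping.keys (mon ?a - mon ?b :: ('v,'k) mpoly) \<subseteq> {?a, ?b}"
    using keys_diff[of "mon ?a :: ('v,'k) mpoly" "mon ?b"] unfolding mon_def by (simp add: insert_commute)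
  have "monom_deg ?a = 2" "monom_deg ?b = 2" by (simp_all add: monom_deg_add)
  then show ?thesis unfolding homogeneous_of_deg_def var_mult_var using k by blast
qed

lemma binom_RG:
  assumes "S1 \<in> stable_sets d E" "S2 \<in> stable_sets d E" "S3 \<in> stable_sets d E" "S4 \<in> stable_sets d E"
  shows "((var S1 * var S2 - var S3 * var S4) :: (nat set,'k::comm_ring_1) mpoly) \<in> RG d E"
proof -
  have R: "subring (RG d E :: (nat set,'k) mpoly set)" by (rule RG_subring)
  have "(var S1 * var S2 :: (nat set,'k) mpoly) \<in> RG d E" "(var S3 * var S4 :: (nat set,'k) mpoly) \<in> RG d E"
    using R var_RG[OF assms(1)] var_RG[OF assms(2)] var_RG[OF assms(3)] var_RG[OF assms(4)]
    unfolding subring_def by blast+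
  then show ?thesis using R unfolding subring_def diff_conv_add_uminus by blast
qed

lemma mono_img_var: "finite S \<Longrightarrow> mono_img (Poly_Mapping.single S 1) = Poly_Mapping.single None 1 + (\<Sum>j\<in>S. Poly_Mapping.single (Some j) 1)"
  by (simp add: mono_img_single)

lemma piG_binom: "piG ((var S1 * var S2 - var S3 * var S4) :: (nat set,'k::comm_ring_1) mpoly)
   = mon (mono_img (Poly_Mapping.single S1 1 + Poly_Mapping.single S2 1)) - mon (mono_img (Poly_Mapping.single S3 1 + Poly_Mapping.single S4 1))"
  by (simp add: var_mult_var piG_diff piG_mon)

lemma img_disjoint_union:
  assumes "finite S1" "finite S2" "S1 \<inter> S2 = {}"
  shows "mono_img (Poly_Mapping.single S1 1 + Poly_Mapping.single S2 1) =
     Poly_Mapping.single None 1 + Poly_Mapping.single None 1 + (\<Sum>j\<in>S1 \<union> S2. Poly_Mapping.single (Some j) 1)"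
  using assms by (simp add: mono_img_add mono_img_single sum.union_disjoint ac_simps)

lemma J_gen_IG:
  assumes "S1 \<in> stable_sets d E" "S2 \<in> stable_sets d E" "S3 \<in> stable_sets d E" "S4 \<in> stable_sets d E"
    "S1 \<inter> S2 = {}" "S3 \<inter> S4 = {}" "S1 \<union> S2 = S3 \<union> S4"
  shows "((var S1 * var S2 - var S3 * var S4) :: (nat set,'k::comm_ring_1) mpoly) \<in> IG d E"
proof -
  have f: "finite S1" "finite S2" "finite S3" "finite S4" using assms(1-4) stable_finite by blast+
  have "mono_img (Poly_Mapping.single S1 1 + Poly_Mapping.single S2 1) = mono_img (Poly_Mapping.single S3 1 + Poly_Mapping.single S4 1)"
    using img_disjoint_union[OF f(1,2) assms(5)] img_disjoint_union[OF f(3,4) assms(6)] assms(7) by simp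
  then have "piG ((var S1 * var S2 - var S3 * var S4) :: (nat set,'k::comm_ring_1) mpoly) = 0"
    by (simp only: piG_binom) simp
  then show ?thesis unfolding IG_def using binom_RG[OF assms(1-4)] by blast
qed

definition Jgens :: "nat \<Rightarrow> nat set set \<Rightarrow> (nat set, 'k::comm_ring_1) mpoly set" where
  "Jgens d E = {var S1 * var S2 - var S3 * var S4 | S1 S2 S3 S4.
        S1 \<in> stable_sets d E \<and> S2 \<in> stable_sets d E \<and> S3 \<in> stable_sets d E \<and> S4 \<in> stable_sets d E \<and>
        S1 \<inter> S2 = {} \<and> S3 \<inter> S4 = {} \<and> S1 \<union> S2 = S3 \<union> S4}"

definition Lgens :: "nat \<Rightarrow> nat set set \<Rightarrow> (nat set, 'k::comm_ring_1) mpoly set" where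
  "Lgens d E = {var (S - {i}) * var {i} - var S * var {} | i S.
        S \<in> stable_sets d E \<and> i \<in> S \<and> card S \<ge> 2}"

definition IG2gens :: "nat \<Rightarrow> nat set set \<Rightarrow> (nat set, 'k::comm_ring_1) mpoly set" where
  "IG2gens d E = {p \<in> IG d E. homogeneous_of_deg 2 p}"

lemma JG_alt: "JG d E = ideal_gen (RG d E) (Jgens d E)"
  unfolding JG_def Jgens_def ..
lemma LG_alt: "LG d E = ideal_gen (RG d E) (Lgens d E)"
  unfolding LG_def Lgens_def ..
lemma IG2_alt: "IG2 d E = ideal_gen (RG d E) (IG2gens d E)"
  unfolding IG2_def IG2gens_def ..

lemma Lgens_Jgens: "(Lgens d E :: (nat set,'k::comm_ring_1) mpoly set) \<subseteq> Jgens d E"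
proof
  fix g :: "(nat set,'k) mpoly" assume "g \<in> Lgens d E"
  then obtain i S where g: "g = var (S - {i}) * var {i} - var S * var {}"
    and S: "S \<in> stable_sets d E" "i \<in> S" "2 \<le> card S"
    unfolding Lgens_def by blast
  have st: "S - {i} \<in> stable_sets d E" "{i} \<in> stable_sets d E" "{} \<in> stable_sets d E" "S - {i} \<union> {i} = S \<union> {}"
    using stable_subset[OF S(1)] S(2) by auto
  show "g \<in> Jgens d E" unfolding Jgens_def g
    by (intro CollectI exI[of _ "S - {i}"] exI[of _ "{i}"] exI[of _ S] exI[of _ "{}"] conjI refl)
       (use S st in auto)
qed

lemma Jgens_IG2gens: "(Jgens d E :: (nat set,'k::comm_ring_1) mpoly set) \<subseteq> IG2gens d E"
proof
  fix g :: "(nat set,'k) mpoly" assume "g \<in> Jgens d E"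
  then obtain S1 S2 S3 S4 where g: "g = var S1 * var S2 - var S3 * var S4"
    and S: "S1 \<in> stable_sets d E" "S2 \<in> stable_sets d E" "S3 \<in> stable_sets d E" "S4 \<in> stable_sets d E"
        "S1 \<inter> S2 = {}" "S3 \<inter> S4 = {}" "S1 \<union> S2 = S3 \<union> S4"
    unfolding Jgens_def by blast
  show "g \<in> IG2gens d E" unfolding IG2gens_def g
    using J_gen_IG[OF S] homog_binom[of S1 S2 S3 S4] by blast
qed

lemma IG2gens_IG: "IG2gens d E \<subseteq> IG d E"
  unfolding IG2gens_def by (rule subsetI) simp

lemma LG_JG: "LG d E \<subseteq> JG d E"
  unfolding LG_alt JG_alt
  by (rule ig_mono[OF RG_subring]) (use Lgens_Jgens ig_gen[OF RG_subring] in blast)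

lemma JG_IG2: "JG d E \<subseteq> IG2 d E"
  unfolding IG2_alt JG_alt
  by (rule ig_mono[OF RG_subring]) (use Jgens_IG2gens ig_gen[OF RG_subring] in blast)

lemma IG2_IG: "IG2 d E \<subseteq> IG d E"
  unfolding IG2_alt by (rule ig_min[OF IG_closed IG2gens_IG])

lemma Lgen_in_LG:
  assumes "S \<in> stable_sets d E" "i \<in> S" "card S \<ge> 2"
  shows "(var (S - {i}) * var {i} - var S * var {} :: (nat set, 'k::comm_ring_1) mpoly) \<in> LG d E"
  unfolding LG_alt by (rule ig_gen[OF RG_subring]) (use assms in \<open>auto simp: Lgens_def\<close>)

lemma Jgen_in_JG:
  assumes "S1 \<in> stable_sets d E" "S2 \<in> stable_sets d E" "S3 \<in> stable_sets d E" "S4 \<in> stable_sets d E"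
    "S1 \<inter> S2 = {}" "S3 \<inter> S4 = {}" "S1 \<union> S2 = S3 \<union> S4"
  shows "((var S1 * var S2 - var S3 * var S4) :: (nat set,'k::comm_ring_1) mpoly) \<in> JG d E"
  unfolding JG_alt by (rule ig_gen[OF RG_subring]) (use assms in \<open>auto simp: Jgens_def\<close>)

lemma var_empty_notin_IG: "(var {} :: (nat set,'k::comm_ring_1) mpoly) \<notin> IG d E"
proof -
  have "piG (var {} :: (nat set,'k) mpoly) = mon (Poly_Mapping.single None 1)"
    by (simp add: var_mon piG_mon mono_img_single)
  moreover have "mon (Poly_Mapping.single None 1) \<noteq> (0 :: (nat option,'k) mpoly)"
    unfolding mon_def by (metis lookup_single_eq lookup_zero one_neq_zero)
  ultimately show ?thesis by (simp add: IG_def)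
qed



lemma subring_power: "subring R \<Longrightarrow> a \<in> R \<Longrightarrow> a ^ n \<in> R"
  by (induction n) (auto simp: subring_def)

lemma RG_mult: "a \<in> RG d E \<Longrightarrow> b \<in> RG d E \<Longrightarrow> a * b \<in> (RG d E :: (nat set,'k::comm_ring_1) mpoly set)"
  using RG_subring unfolding subring_def by blast

lemma RG_power: "a \<in> RG d E \<Longrightarrow> a ^ n \<in> (RG d E :: (nat set,'k::comm_ring_1) mpoly set)"
  using RG_subring subring_power by blast

lemma mon_RG: "Poly_Mapping.keys m \<subseteq> stable_sets d E \<Longrightarrow> (mon m :: (nat set,'k::comm_ring_1) mpoly) \<in> RG d E"
  unfolding RG_def by (rule mon_in_poly_ring)

lemma const_RG: "(Poly_Mapping.single 0 c :: (nat set,'k::comm_ring_1) mpoly) \<in> RG d E"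
  unfolding RG_def by (rule const_in_poly_ring)

definition theta :: "nat option \<Rightarrow> nat set" where
  "theta v = (case v of None \<Rightarrow> {} | Some j \<Rightarrow> {j})"

definition Th :: "(nat option \<Rightarrow>\<^sub>0 nat) \<Rightarrow> (nat set \<Rightarrow>\<^sub>0 nat)" where
  "Th u = push theta u"

definition wt :: "(nat option \<Rightarrow>\<^sub>0 nat) \<Rightarrow> nat" where
  "wt u = (\<Sum>v\<in>Poly_Mapping.keys u. if v = None then 0 else Poly_Mapping.lookup u v)"

lemma wt_add: "wt (a + b) = wt a + wt b"
  unfolding wt_def by (rule keysum_add[where h="\<lambda>v k. if v = None then 0 else k"]) auto

lemma wt_zero [simp]: "wt 0 = 0"
  unfolding wt_def by simp

lemma wt_single: "wt (Poly_Mapping.single v k) = (if v = None then 0 else k)"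
  unfolding wt_def by (cases "k = 0") auto

lemma wt_sum: "wt (sum f A) = (\<Sum>a\<in>A. wt (f a))"
  by (induction A rule: infinite_finite_induct) (auto simp: wt_add)

lemma Th_add: "Th (a + b) = Th a + Th b"
  unfolding Th_def by (rule push_add)

lemma img_var_finite: "finite S \<Longrightarrow> mono_img (Poly_Mapping.single S 1) = Poly_Mapping.single None 1 + (\<Sum>j\<in>S. Poly_Mapping.single (Some j) 1)"
  by (simp add: mono_img_single)

lemma wt_img_var: assumes "finite S" shows "wt (mono_img (Poly_Mapping.single S 1)) = card S"
  unfolding img_var_finite[OF assms] by (simp add: wt_add wt_sum wt_single)

definition QQ :: "nat set \<Rightarrow> (nat set \<Rightarrow>\<^sub>0 nat)" where
  "QQ S = Poly_Mapping.single {} 1 + (\<Sum>j\<in>S. Poly_Mapping.single {j} 1)"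

lemma Th_img_var: assumes "finite S" shows "Th (mono_img (Poly_Mapping.single S 1)) = QQ S"
  unfolding img_var_finite[OF assms] by (simp add: Th_def push_add push_sum theta_def QQ_def)

lemma keys_push: "Poly_Mapping.keys (push f p) \<subseteq> f ` Poly_Mapping.keys p"
  unfolding push_def using keys_sum[of "\<lambda>m. Poly_Mapping.single (f m) (Poly_Mapping.lookup p m)" "Poly_Mapping.keys p"]
  by (auto split: if_splits)

lemma keys_img: "Poly_Mapping.keys (mono_img m) \<subseteq> insert None (Some ` \<Union>(Poly_Mapping.keys m))"
proof -
  have "Poly_Mapping.keys (mono_img m) \<subseteq> (\<Union>S\<in>Poly_Mapping.keys m. Poly_Mapping.keys
      (Poly_Mapping.single None (Poly_Mapping.lookup m S) + (\<Sum>j\<in>S. Poly_Mapping.single (Some j) (Poly_Mapping.lookup m S))))"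
    unfolding mono_img_def by (rule keys_sum)
  also have "\<dots> \<subseteq> insert None (Some ` \<Union>(Poly_Mapping.keys m))"
  proof (rule UN_least)
    fix S assume S: "S \<in> Poly_Mapping.keys m"
    have "Poly_Mapping.keys (\<Sum>j\<in>S. Poly_Mapping.single (Some j) (Poly_Mapping.lookup m S)) \<subseteq> Some ` S"
      using keys_sum[of "\<lambda>j. Poly_Mapping.single (Some j) (Poly_Mapping.lookup m S)" S] by (auto split: if_splits)
    then show "Poly_Mapping.keys (Poly_Mapping.single None (Poly_Mapping.lookup m S) + (\<Sum>j\<in>S. Poly_Mapping.single (Some j) (Poly_Mapping.lookup m S)))
        \<subseteq> insert None (Some ` \<Union>(Poly_Mapping.keys m))"
      using keys_add[of "Poly_Mapping.single None (Poly_Mapping.lookup m S)" "\<Sum>j\<in>S. Poly_Mapping.single (Some j) (Poly_Mapping.lookup m S)"] S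
      by (auto split: if_splits)
  qed
  finally show ?thesis .
qed

lemma keys_Th_img:
  assumes G: "simple_graph_on d E" and m: "Poly_Mapping.keys m \<subseteq> stable_sets d E"
  shows "Poly_Mapping.keys (Th (mono_img m)) \<subseteq> stable_sets d E"
proof -
  have "Poly_Mapping.keys (Th (mono_img m)) \<subseteq> theta ` Poly_Mapping.keys (mono_img m)"
    unfolding Th_def by (rule keys_push)
  also have "\<dots> \<subseteq> theta ` insert None (Some ` \<Union>(Poly_Mapping.keys m))"
    by (rule image_mono[OF keys_img])
  also have "\<dots> \<subseteq> stable_sets d E"
  proof
    fix T assume "T \<in> theta ` insert None (Some ` \<Union>(Poly_Mapping.keys m))"
    then obtain v where v: "v \<in> insert None (Some ` \<Union>(Poly_Mapping.keys m))" "T = theta v"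
      by (rule imageE) simp
    show "T \<in> stable_sets d E"
    proof (cases v)
      case None then show ?thesis using stable_empty[OF G] v by (simp add: theta_def)
    next
      case (Some j)
      then obtain S where S: "j \<in> S" "S \<in> Poly_Mapping.keys m" using v(1) by auto
      then have "j \<in> {1..d}" using m stable_sub_range by blast
      then show ?thesis using stable_singleton[OF G] v Some by (simp add: theta_def)
    qed
  qed
  finally show ?thesis .
qed

lemma claim1:
  assumes G: "simple_graph_on d E"
  shows "S \<in> stable_sets d E \<Longrightarrow>
    (var {} ^ card S * var S - mon (QQ S) :: (nat set,'k::comm_ring_1) mpoly) \<in> LG d E"
proof (induction S rule: infinite_finite_induct)
  case (infinite S)
  then show ?case using stable_finite by blast
next
  case empty
  have "(var {} ^ card {} * var {} - mon (QQ {}) :: (nat set,'k) mpoly) = 0"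
    by (simp add: QQ_def var_mon)
  then show ?case using ig_zero unfolding LG_alt by metis
next
  case (insert i S')
  let ?T = "insert i S'"
  have S': "S' \<in> stable_sets d E" using stable_subset[OF insert.prems] by blast
  have IH: "(var {} ^ card S' * var S' - mon (QQ S') :: (nat set,'k) mpoly) \<in> LG d E"
    using insert.IH[OF S'] .
  have QT: "mon (QQ ?T) = (mon (QQ S') * var {i} :: (nat set,'k) mpoly)"
    using insert.hyps by (simp add: QQ_def var_mon mon_mult ac_simps)
  show ?case
  proof (cases "S' = {}")
    case True
    have "(var {} ^ card ?T * var ?T - mon (QQ ?T) :: (nat set,'k) mpoly) = 0"
      using True by (simp add: QQ_def var_mon mon_mult)
    then show ?thesis using ig_zero unfolding LG_alt by metis
  next
    case False
    then have c: "card ?T = Suc (card S')" "card S' \<ge> 1" using insert.hyps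
      by (simp_all add: Suc_le_eq card_gt_0_iff)
    have g: "(var (?T - {i}) * var {i} - var ?T * var {} :: (nat set,'k) mpoly) \<in> LG d E"
      by (rule Lgen_in_LG[OF insert.prems]) (use c in auto)
    have TS: "?T - {i} = S'" using insert.hyps by auto
    let ?X = "var {} :: (nat set,'k) mpoly"
    have eq: "(?X ^ card ?T * var ?T - mon (QQ ?T) :: (nat set,'k) mpoly) =
       var {i} * (?X ^ card S' * var S' - mon (QQ S')) - ?X ^ card S' * (var S' * var {i} - var ?T * ?X)"
      unfolding QT c(1) by (simp add: algebra_simps)
    have R: "var {i} \<in> (RG d E :: (nat set,'k) mpoly set)" "?X ^ card S' \<in> RG d E"
      using var_RG[OF stable_subset[OF insert.prems, of "{i}"]] RG_power[OF var_RG[OF stable_empty[OF G]]] by auto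
    show ?thesis unfolding eq LG_alt
      using ig_diff[OF RG_subring ig_mult[OF RG_subring R(1) IH[unfolded LG_alt]] ig_mult[OF RG_subring R(2) g[unfolded LG_alt TS]]] .
  qed
qed



definition P2 :: "nat \<Rightarrow> nat set set \<Rightarrow> (nat set \<Rightarrow>\<^sub>0 nat) \<Rightarrow> 'k::comm_ring_1 itself \<Rightarrow> bool" where
  "P2 d E m (_::'k itself) \<longleftrightarrow>
    (var {} ^ wt (mono_img m) * mon m - mon (Th (mono_img m)) :: (nat set,'k) mpoly) \<in> LG d E"

lemma Th_zero [simp]: "Th 0 = 0" by (simp add: Th_def)

lemma P2_zero: "P2 d E 0 TYPE('k::comm_ring_1)"
  unfolding P2_def using ig_zero[of "RG d E" "Lgens d E"] by (simp add: mon_zero LG_alt)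

lemma P2_add:
  assumes G: "simple_graph_on d E" and a: "Poly_Mapping.keys a \<subseteq> stable_sets d E"
    and b: "Poly_Mapping.keys b \<subseteq> stable_sets d E"
    and Pa: "P2 d E a TYPE('k::comm_ring_1)" and Pb: "P2 d E b TYPE('k)"
  shows "P2 d E (a + b) TYPE('k)"
proof -
  let ?X = "var {} :: (nat set,'k) mpoly"
  define A1 where "A1 = ?X ^ wt (mono_img a) * mon a"
  define A2 where "A2 = ?X ^ wt (mono_img b) * mon b"
  define B1 where "B1 = (mon (Th (mono_img a)) :: (nat set,'k) mpoly)"
  define B2 where "B2 = (mon (Th (mono_img b)) :: (nat set,'k) mpoly)"
  have e1: "?X ^ wt (mono_img (a + b)) * mon (a + b) = A1 * A2"
    unfolding A1_def A2_def by (simp add: mono_img_add wt_add power_add flip: mon_mult)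
  have e2: "mon (Th (mono_img (a + b))) = B1 * B2"
    unfolding B1_def B2_def by (simp add: mono_img_add Th_add mon_mult)
  have e3: "A1 * A2 - B1 * B2 = A1 * (A2 - B2) + B2 * (A1 - B1)"
    by (simp add: algebra_simps)
  have RA1: "A1 \<in> RG d E" unfolding A1_def
    by (rule RG_mult[OF RG_power[OF var_RG[OF stable_empty[OF G]]] mon_RG[OF a]])
  have RB2: "B2 \<in> RG d E" unfolding B2_def by (rule mon_RG[OF keys_Th_img[OF G b]])
  have "A2 - B2 \<in> LG d E" "A1 - B1 \<in> LG d E"
    using Pa Pb unfolding P2_def A1_def A2_def B1_def B2_def by auto
  then have "A1 * (A2 - B2) + B2 * (A1 - B1) \<in> LG d E"
    unfolding LG_alt using ig_add[OF RG_subring] ig_mult[OF RG_subring] RA1 RB2 by blast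
  then show ?thesis unfolding P2_def e1 e2 e3 .
qed

lemma P2_var:
  assumes G: "simple_graph_on d E" and S: "S \<in> stable_sets d E"
  shows "P2 d E (Poly_Mapping.single S 1) TYPE('k::comm_ring_1)"
  unfolding P2_def wt_img_var[OF stable_finite[OF S]] Th_img_var[OF stable_finite[OF S]]
  using claim1[OF G S] unfolding var_mon[of S] .

lemma P2_single:
  assumes G: "simple_graph_on d E" and S: "S \<in> stable_sets d E"
  shows "P2 d E (Poly_Mapping.single S k) TYPE('k::comm_ring_1)"
proof (induction k)
  case 0 then show ?case using P2_zero by simp
next
  case (Suc k)
  have "Poly_Mapping.single S (Suc k) = Poly_Mapping.single S k + Poly_Mapping.single S 1"
    by (simp flip: single_add)
  moreover have "P2 d E (Poly_Mapping.single S k + Poly_Mapping.single S 1) TYPE('k)"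
    by (rule P2_add[OF G _ _ Suc P2_var[OF G S]]) (use S in auto)
  ultimately show ?case by simp
qed

lemma keys_sum_single: "Poly_Mapping.keys (\<Sum>S\<in>F. Poly_Mapping.single S (c S)) \<subseteq> F"
proof -
  have "(\<Union>S\<in>F. Poly_Mapping.keys (Poly_Mapping.single S (c S))) \<subseteq> F" by auto
  then show ?thesis using keys_sum[of "\<lambda>S. Poly_Mapping.single S (c S)" F] by blast
qed

lemma P2_all:
  assumes G: "simple_graph_on d E" and m: "Poly_Mapping.keys m \<subseteq> stable_sets d E"
  shows "P2 d E m TYPE('k::comm_ring_1)"
proof -
  have H: "\<And>F. F \<subseteq> Poly_Mapping.keys m \<Longrightarrow> P2 d E (\<Sum>S\<in>F. Poly_Mapping.single S (Poly_Mapping.lookup m S)) TYPE('k)"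
  proof -
    fix F assume F: "F \<subseteq> Poly_Mapping.keys m"
    have "finite F" by (rule finite_subset[OF F finite_keys])
    then show "P2 d E (\<Sum>S\<in>F. Poly_Mapping.single S (Poly_Mapping.lookup m S)) TYPE('k)"
      using F
    proof (induction F rule: finite_induct)
      case empty then show ?case using P2_zero by simp
    next
      case (insert x F)
      have x: "x \<in> stable_sets d E" using insert.prems m by blast
      have IH': "P2 d E (\<Sum>S\<in>F. Poly_Mapping.single S (Poly_Mapping.lookup m S)) TYPE('k)"
        using insert.IH insert.prems by blast
      have Px: "P2 d E (Poly_Mapping.single x (Poly_Mapping.lookup m x)) TYPE('k)"
        by (rule P2_single[OF G x])
      have k1: "Poly_Mapping.keys (Poly_Mapping.single x (Poly_Mapping.lookup m x)) \<subseteq> stable_sets d E"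
        using x by simp
      have k2: "Poly_Mapping.keys (\<Sum>S\<in>F. Poly_Mapping.single S (Poly_Mapping.lookup m S)) \<subseteq> stable_sets d E"
        using keys_sum_single[of "Poly_Mapping.lookup m" F] insert.prems m by blast
      have "P2 d E (Poly_Mapping.single x (Poly_Mapping.lookup m x) + (\<Sum>S\<in>F. Poly_Mapping.single S (Poly_Mapping.lookup m S))) TYPE('k)"
        by (rule P2_add[OF G k1 k2 Px IH'])
      then show ?case by (simp only: sum.insert[OF insert.hyps])
    qed
  qed
  have eq: "(\<Sum>S\<in>Poly_Mapping.keys m. Poly_Mapping.single S (Poly_Mapping.lookup m S)) = m"
    by (rule poly_expand[symmetric])
  show ?thesis using H[OF subset_refl] unfolding eq .
qed

lemma claim3:
  fixes f :: "(nat set,'k::comm_ring_1) mpoly"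
  assumes G: "simple_graph_on d E" and f: "f \<in> IG d E"
  shows "\<exists>N. (var {} ^ N * f :: (nat set,'k) mpoly) \<in> LG d E"
proof -
  let ?X = "var {} :: (nat set,'k) mpoly"
  have fR: "f \<in> RG d E" and f0: "piG f = 0" using f unfolding IG_def by auto
  define w where "w m = wt (mono_img m)" for m
  define N where "N = (\<Sum>m\<in>Poly_Mapping.keys f. w m)"
  define Phi where "Phi u = Th u + Poly_Mapping.single {} (N - wt u)" for u
  have wN: "w m \<le> N" if "m \<in> Poly_Mapping.keys f" for m
    unfolding N_def by (rule member_le_sum) (use that in auto)
  have km: "Poly_Mapping.keys m \<subseteq> stable_sets d E" if "m \<in> Poly_Mapping.keys f" for m
    using fR that unfolding RG_def poly_ring_def by blast
  have LGc: "closed_ideal (RG d E) (LG d E :: (nat set,'k) mpoly set)"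
    unfolding LG_alt by (rule ig_closed[OF RG_subring])
  have push0: "push (Phi \<circ> mono_img) f = 0"
    using f0 by (simp add: piG_push flip: push_comp)
  have tm: "?X ^ N * Poly_Mapping.single m (Poly_Mapping.lookup f m) - Poly_Mapping.single ((Phi \<circ> mono_img) m) (Poly_Mapping.lookup f m)
      = (Poly_Mapping.single 0 (Poly_Mapping.lookup f m) * ?X ^ (N - w m)) * (?X ^ w m * mon m - mon (Th (mono_img m)))"
    if "m \<in> Poly_Mapping.keys f" for m
  proof -
    let ?c = "Poly_Mapping.lookup f m"
    have N: "N = (N - w m) + w m" using wN[OF that] by simp
    have s1: "Poly_Mapping.single m ?c = Poly_Mapping.single 0 ?c * mon m"
      by (simp add: mon_def mult_single)
    have s2: "Poly_Mapping.single ((Phi \<circ> mono_img) m) ?c = Poly_Mapping.single 0 ?c * ?X ^ (N - w m) * mon (Th (mono_img m))"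
      by (simp add: Phi_def w_def var_power mon_def mult_single ac_simps)
    show ?thesis
      apply (subst s1, subst s2, subst (1) N)
      by (simp add: power_add algebra_simps)
  qed
  have "?X ^ N * f - push (Phi \<circ> mono_img) f =
     (\<Sum>m\<in>Poly_Mapping.keys f. ?X ^ N * Poly_Mapping.single m (Poly_Mapping.lookup f m) - Poly_Mapping.single ((Phi \<circ> mono_img) m) (Poly_Mapping.lookup f m))"
    by (subst (1) poly_expand) (simp add: push_def sum_distrib_left sum_subtractf)
  also have "\<dots> \<in> LG d E"
  proof (rule closed_sum[OF LGc], rule ballI)
    fix m assume m: "m \<in> Poly_Mapping.keys f"
    have "P2 d E m TYPE('k)" by (rule P2_all[OF G km[OF m]])
    then have L: "?X ^ w m * mon m - mon (Th (mono_img m)) \<in> LG d E" unfolding P2_def w_def .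
    have R: "Poly_Mapping.single 0 (Poly_Mapping.lookup f m) * ?X ^ (N - w m) \<in> RG d E"
      by (rule RG_mult[OF const_RG RG_power[OF var_RG[OF stable_empty[OF G]]]])
    show "?X ^ N * Poly_Mapping.single m (Poly_Mapping.lookup f m) - Poly_Mapping.single ((Phi \<circ> mono_img) m) (Poly_Mapping.lookup f m) \<in> LG d E"
      unfolding tm[OF m] LG_alt using ig_mult[OF RG_subring R L[unfolded LG_alt]] .
  qed
  finally show ?thesis using push0 by auto
qed

lemma prime_imp_IG:
  assumes G: "simple_graph_on d E" and P: "prime_ideal_in (RG d E) I"
    and LI: "LG d E \<subseteq> I" and IIG: "I \<subseteq> (IG d E :: (nat set,'k::comm_ring_1) mpoly set)"
  shows "I = IG d E"
proof
  show "I \<subseteq> IG d E" by (rule IIG)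
  let ?X = "var {} :: (nat set,'k) mpoly"
  have XR: "?X \<in> RG d E" by (rule var_RG[OF stable_empty[OF G]])
  have Xn: "?X \<notin> I" using IIG var_empty_notin_IG by blast
  have one: "(1 :: (nat set,'k) mpoly) \<notin> I"
  proof
    assume "1 \<in> I"
    then have "\<forall>r\<in>RG d E. r * 1 \<in> I" using P unfolding prime_ideal_in_def is_ideal_in_def by blast
    then have "RG d E \<subseteq> I" by auto
    moreover have "I \<subseteq> RG d E" using P unfolding prime_ideal_in_def is_ideal_in_def by blast
    ultimately show False using P unfolding prime_ideal_in_def by blast
  qed
  have pw: "?X ^ n \<notin> I" for n
  proof (induction n)
    case 0 then show ?case using one by simp
  next
    case (Suc n)
    show ?case
    proof
      assume "?X ^ Suc n \<in> I"
      then have "?X * ?X ^ n \<in> I" by simp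
      then have "?X \<in> I \<or> ?X ^ n \<in> I"
        using P RG_power[OF XR, of n] XR unfolding prime_ideal_in_def by blast
      then show False using Xn Suc.IH by blast
    qed
  qed
  show "IG d E \<subseteq> I"
  proof
    fix f :: "(nat set,'k) mpoly" assume f: "f \<in> IG d E"
    then obtain N where "?X ^ N * f \<in> LG d E" using claim3[OF G] by blast
    then have "?X ^ N * f \<in> I" using LI by blast
    moreover have "f \<in> RG d E" using f unfolding IG_def by blast
    ultimately show "f \<in> I" using P pw RG_power[OF XR, of N] unfolding prime_ideal_in_def by blast
  qed
qed



lemma deg_split:
  assumes "(m :: 'v \<Rightarrow>\<^sub>0 nat) \<noteq> 0"
  shows "\<exists>S\<in>Poly_Mapping.keys m. m = Poly_Mapping.single S 1 + (m - Poly_Mapping.single S 1) \<and>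
     monom_deg (m - Poly_Mapping.single S 1) = monom_deg m - 1 \<and>
     Poly_Mapping.keys (m - Poly_Mapping.single S 1) \<subseteq> Poly_Mapping.keys m"
proof -
  obtain S where S: "S \<in> Poly_Mapping.keys m" using assms by (metis keys_eq_empty ex_in_conv)
  then have l: "Poly_Mapping.lookup m S \<ge> 1" by (simp add: in_keys_iff)
  have eq: "m = Poly_Mapping.single S 1 + (m - Poly_Mapping.single S 1)"
    by (rule poly_mapping_eqI) (use l in \<open>auto simp: lookup_add lookup_minus lookup_single when_def\<close>)
  have "monom_deg m = 1 + monom_deg (m - Poly_Mapping.single S 1)"
    by (subst eq) (simp add: monom_deg_add)
  moreover have "Poly_Mapping.keys (m - Poly_Mapping.single S 1) \<subseteq> Poly_Mapping.keys m"
    by (auto simp: in_keys_iff lookup_minus)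
  ultimately show ?thesis using S eq by auto
qed

lemma deg2_decomp:
  assumes "monom_deg (m :: 'v \<Rightarrow>\<^sub>0 nat) = 2"
  shows "\<exists>S1 S2. m = Poly_Mapping.single S1 1 + Poly_Mapping.single S2 1 \<and> S1 \<in> Poly_Mapping.keys m \<and> S2 \<in> Poly_Mapping.keys m"
proof -
  have "m \<noteq> 0" using assms by auto
  then obtain S1 where S1: "S1 \<in> Poly_Mapping.keys m" and e1: "m = Poly_Mapping.single S1 1 + (m - Poly_Mapping.single S1 1)"
    and d1: "monom_deg (m - Poly_Mapping.single S1 1) = 1"
    and k1: "Poly_Mapping.keys (m - Poly_Mapping.single S1 1) \<subseteq> Poly_Mapping.keys m"
    using deg_split[of m] assms by auto
  define m1 where "m1 = m - Poly_Mapping.single S1 1"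
  have "m1 \<noteq> 0" using d1 unfolding m1_def by auto
  then obtain S2 where S2: "S2 \<in> Poly_Mapping.keys m1" and e2: "m1 = Poly_Mapping.single S2 1 + (m1 - Poly_Mapping.single S2 1)"
    and d2: "monom_deg (m1 - Poly_Mapping.single S2 1) = 0"
    using deg_split[of m1] d1 unfolding m1_def by auto
  have "m1 - Poly_Mapping.single S2 1 = 0" using d2 monom_deg_eq_0 by blast
  then have "m = Poly_Mapping.single S1 1 + Poly_Mapping.single S2 1"
    using e1 e2 unfolding m1_def by simp
  moreover have "S2 \<in> Poly_Mapping.keys m" using S2 k1 unfolding m1_def by blast
  ultimately show ?thesis using S1 by blast
qed

lemma fiber:
  fixes p :: "(nat set, 'k::comm_ring_1) mpoly"
  assumes I: "closed_ideal (RG d E) I" and p: "p \<in> IG d E"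
    and H: "\<And>m m'. m \<in> Poly_Mapping.keys p \<Longrightarrow> m' \<in> Poly_Mapping.keys p \<Longrightarrow> mono_img m = mono_img m' \<Longrightarrow> mon m - mon m' \<in> I"
  shows "p \<in> I"
proof -
  define rho where "rho u = (SOME m'. m' \<in> Poly_Mapping.keys p \<and> mono_img m' = u)" for u
  have rho: "rho (mono_img m) \<in> Poly_Mapping.keys p \<and> mono_img (rho (mono_img m)) = mono_img m"
    if "m \<in> Poly_Mapping.keys p" for m
    unfolding rho_def by (rule someI[of _ m]) (use that in auto)
  have "push rho (push mono_img p) = 0" using p unfolding IG_def by (simp add: piG_push)
  then have p0: "push (rho \<circ> mono_img) p = 0" by (simp add: push_comp)
  have "p - push (rho \<circ> mono_img) p = (\<Sum>m\<in>Poly_Mapping.keys p.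
      Poly_Mapping.single 0 (Poly_Mapping.lookup p m) * (mon m - mon (rho (mono_img m))))"
    by (subst (1) poly_expand) (simp add: push_def sum_subtractf algebra_simps mon_def mult_single)
  also have "\<dots> \<in> I"
  proof (rule closed_sum[OF I], rule ballI)
    fix m assume m: "m \<in> Poly_Mapping.keys p"
    have "mon m - mon (rho (mono_img m)) \<in> I" using H[OF m] rho[OF m] by metis
    then show "Poly_Mapping.single 0 (Poly_Mapping.lookup p m) * (mon m - mon (rho (mono_img m))) \<in> I"
      using I const_RG unfolding closed_ideal_def by blast
  qed
  finally show ?thesis using p0 by simp
qed

lemma coeff_zero:
  fixes r :: "('v, 'k::comm_ring_1) mpoly"
  assumes "monom_deg M1 = monom_deg M0" "M1 \<noteq> M0"
  shows "Poly_Mapping.lookup (r * mon M1) M0 = 0"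
proof -
  have "r * mon M1 = (\<Sum>a\<in>Poly_Mapping.keys r. Poly_Mapping.single (a + M1) (Poly_Mapping.lookup r a))"
    by (subst (1) poly_expand) (simp add: sum_distrib_right mon_def mult_single)
  moreover have "a + M1 \<noteq> M0" for a
  proof
    assume "a + M1 = M0"
    then have "monom_deg a = 0" using assms(1) monom_deg_add[of a M1] by simp
    then have "a = 0" by (rule monom_deg_eq_0)
    then show False using \<open>a + M1 = M0\<close> assms(2) by simp
  qed
  ultimately show ?thesis by (simp add: lookup_sum lookup_single when_def)
qed

lemma coeff_binom_zero:
  fixes r :: "('v, 'k::comm_ring_1) mpoly"
  assumes "monom_deg M1 = monom_deg M0" "M1 \<noteq> M0" "monom_deg M2 = monom_deg M0" "M2 \<noteq> M0"
  shows "Poly_Mapping.lookup (r * (mon M1 - mon M2)) M0 = 0"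
  using coeff_zero[OF assms(1,2), of r] coeff_zero[OF assms(3,4), of r]
  by (simp add: right_diff_distrib lookup_minus)

lemma pair_eq:
  assumes "Poly_Mapping.single A (1::nat) + Poly_Mapping.single B 1 = Poly_Mapping.single C 1 + Poly_Mapping.single D 1"
  shows "(A = C \<and> B = D) \<or> (A = D \<and> B = C)"
proof -
  have L: "(1 when A = k) + (1 when B = k) = ((1::nat) when C = k) + (1 when D = k)" for k
    using arg_cong[OF assms, of "\<lambda>m. Poly_Mapping.lookup m k"] by (simp add: lookup_add lookup_single)
  show ?thesis using L[of A] L[of B] L[of C] L[of D] by (auto simp: when_def split: if_splits)
qed

lemma deg2_mon: "monom_deg (Poly_Mapping.single A 1 + Poly_Mapping.single B 1) = 2"
  by (simp add: monom_deg_add)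

section \<open>Part (b)\<close>

lemma keys_RG: "p \<in> RG d E \<Longrightarrow> m \<in> Poly_Mapping.keys p \<Longrightarrow> Poly_Mapping.keys m \<subseteq> stable_sets d E"
  unfolding RG_def poly_ring_def by blast

lemma IG2gens_decomp:
  assumes p: "p \<in> IG2gens d E" and m: "m \<in> Poly_Mapping.keys p"
  shows "\<exists>S1 S2. m = Poly_Mapping.single S1 1 + Poly_Mapping.single S2 1 \<and> S1 \<in> stable_sets d E \<and> S2 \<in> stable_sets d E"
proof -
  have "monom_deg m = 2" using p m unfolding IG2gens_def homogeneous_of_deg_def by blast
  then obtain S1 S2 where "m = Poly_Mapping.single S1 1 + Poly_Mapping.single S2 1" "S1 \<in> Poly_Mapping.keys m" "S2 \<in> Poly_Mapping.keys m"
    using deg2_decomp by blast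
  moreover have "p \<in> RG d E" using p unfolding IG2gens_def IG_def by blast
  ultimately show ?thesis using keys_RG m by blast
qed

lemma part_b:
  assumes G: "simple_graph_on d E"
  shows "((IG d E :: (nat set, 'k::comm_ring_1) mpoly set) = IG2 d E \<longleftrightarrow> generated_by_quadratic_binomials d E (IG d E :: (nat set, 'k) mpoly set))"
proof
  assume eq: "(IG d E :: (nat set, 'k) mpoly set) = IG2 d E"
  define B where "B = {b \<in> (quadratic_binomials d E :: (nat set, 'k) mpoly set). b \<in> IG d E}"
  have "ideal_gen (RG d E) B \<subseteq> IG d E"
    by (rule ig_min[OF IG_closed]) (auto simp: B_def)
  moreover have "IG2gens d E \<subseteq> ideal_gen (RG d E) B"
  proof
    fix p :: "(nat set, 'k) mpoly" assume p: "p \<in> IG2gens d E"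
    show "p \<in> ideal_gen (RG d E) B"
    proof (rule fiber[OF ig_closed[OF RG_subring]])
      show "p \<in> IG d E" using p unfolding IG2gens_def by blast
      fix m m' assume m: "m \<in> Poly_Mapping.keys p" and m': "m' \<in> Poly_Mapping.keys p" and im: "mono_img m = mono_img m'"
      obtain S1 S2 where S12: "m = Poly_Mapping.single S1 1 + Poly_Mapping.single S2 1" "S1 \<in> stable_sets d E" "S2 \<in> stable_sets d E"
        using IG2gens_decomp[OF p m] by blast
      obtain S3 S4 where S34: "m' = Poly_Mapping.single S3 1 + Poly_Mapping.single S4 1" "S3 \<in> stable_sets d E" "S4 \<in> stable_sets d E"
        using IG2gens_decomp[OF p m'] by blast
      have e: "(mon m - mon m' :: (nat set, 'k) mpoly) = var S1 * var S2 - var S3 * var S4"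
        using S12 S34 by (simp add: var_mult_var)
      have pz: "piG (var S1 * var S2 - var S3 * var S4 :: (nat set, 'k) mpoly) = 0"
        unfolding piG_binom using im S12(1) S34(1) by simp
      have q: "(var S1 * var S2 - var S3 * var S4 :: (nat set, 'k) mpoly) \<in> quadratic_binomials d E"
        unfolding quadratic_binomials_def
        by (intro CollectI exI[of _ S1] exI[of _ S2] exI[of _ S3] exI[of _ S4] conjI refl) (use S12 S34 in auto)
      have "(var S1 * var S2 - var S3 * var S4 :: (nat set, 'k) mpoly) \<in> B"
        unfolding B_def IG_def using q pz binom_RG[OF S12(2,3) S34(2,3)] by blast
      then show "mon m - mon m' \<in> ideal_gen (RG d E) B" unfolding e by (rule ig_gen[OF RG_subring])
    qed
  qed
  then have "IG2 d E \<subseteq> ideal_gen (RG d E) B"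
    unfolding IG2_alt by (rule ig_mono[OF RG_subring])
  ultimately have "IG d E = ideal_gen (RG d E) B" using eq by (intro subset_antisym) simp_all
  moreover have "B \<subseteq> quadratic_binomials d E" unfolding B_def by blast
  ultimately show "generated_by_quadratic_binomials d E (IG d E :: (nat set, 'k) mpoly set)"
    unfolding generated_by_quadratic_binomials_def by blast
next
  assume "generated_by_quadratic_binomials d E (IG d E :: (nat set, 'k) mpoly set)"
  then obtain B where B: "B \<subseteq> quadratic_binomials d E" "(IG d E :: (nat set, 'k) mpoly set) = ideal_gen (RG d E) B"
    unfolding generated_by_quadratic_binomials_def by blast
  have "B \<subseteq> IG2gens d E"
  proof
    fix b assume b: "b \<in> B"
    then have "b \<in> IG d E" unfolding B(2) by (rule ig_gen[OF RG_subring])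
    moreover have "homogeneous_of_deg 2 b"
    proof -
      have "b \<in> quadratic_binomials d E" using b B(1) by (rule set_mp[rotated])
      then obtain S1 S2 S3 S4 where "b = var S1 * var S2 - var S3 * var S4"
        unfolding quadratic_binomials_def by blast
      then show ?thesis using homog_binom by simp
    qed
    ultimately show "b \<in> IG2gens d E" unfolding IG2gens_def by blast
  qed
  then have "ideal_gen (RG d E) B \<subseteq> IG2 d E"
    unfolding IG2_alt by (intro ig_mono[OF RG_subring]) (use ig_gen[OF RG_subring] in blast)
  then have "(IG d E :: (nat set, 'k) mpoly set) \<subseteq> IG2 d E" unfolding B(2)[symmetric] .
  then show "(IG d E :: (nat set, 'k) mpoly set) = IG2 d E" using IG2_IG[of d E] by (rule subset_antisym)
qed



abbreviation ind :: "nat \<Rightarrow> nat set \<Rightarrow> nat" where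
  "ind j S \<equiv> (if j \<in> S then 1 else 0)"

definition le2 :: "nat set \<Rightarrow> bool" where
  "le2 S \<longleftrightarrow> (\<forall>x\<in>S. \<forall>y\<in>S. \<forall>z\<in>S. x = y \<or> y = z \<or> x = z)"

lemma le2_pair: "le2 S \<Longrightarrow> a \<in> S \<Longrightarrow> b \<in> S \<Longrightarrow> a \<noteq> b \<Longrightarrow> S = {a, b}"
  unfolding le2_def by blast

lemma comb_c:
  assumes L: "\<And>j. ind j S1 + ind j S2 = ind j S3 + ind j S4"
    and l1: "le2 S1" and l2: "le2 S2" and l3: "le2 S3" and l4: "le2 S4"
    and ne: "S1 \<inter> S2 \<noteq> {}"
  shows "(S1 = S3 \<and> S2 = S4) \<or> (S1 = S4 \<and> S2 = S3)"
proof -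
  have B: "(j \<in> S1 \<and> j \<in> S2) = (j \<in> S3 \<and> j \<in> S4)" for j
    using L[of j] by (cases "j \<in> S1"; cases "j \<in> S2"; cases "j \<in> S3"; cases "j \<in> S4") simp_all
  have O: "(j \<in> S1 \<or> j \<in> S2) = (j \<in> S3 \<or> j \<in> S4)" for j
    using L[of j] by (cases "j \<in> S1"; cases "j \<in> S2"; cases "j \<in> S3"; cases "j \<in> S4") simp_all
  have X: "(j \<in> S1 \<and> j \<notin> S2 \<or> j \<in> S2 \<and> j \<notin> S1) = (j \<in> S3 \<and> j \<notin> S4 \<or> j \<in> S4 \<and> j \<notin> S3)" for j
    using L[of j] by (cases "j \<in> S1"; cases "j \<in> S2"; cases "j \<in> S3"; cases "j \<in> S4") simp_all
  obtain a where a12: "a \<in> S1" "a \<in> S2" using ne by blast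
  have a34: "a \<in> S3" "a \<in> S4" using B[of a] a12 by blast+
  have c13: "S2 = S4" if "S1 = S3" using that B O by blast
  have c14: "S2 = S3" if "S1 = S4" using that B O by blast
  have c23: "S1 = S4" if "S2 = S3" using that B O by blast
  have c24: "S1 = S3" if "S2 = S4" using that B O by blast
  show ?thesis
  proof (cases "S1 = S2")
    case True
    have "S3 = S1" "S4 = S1" using B O True by blast+
    then show ?thesis using True by blast
  next
    case False
    then obtain b where b: "(b \<in> S1 \<and> b \<notin> S2) \<or> (b \<in> S2 \<and> b \<notin> S1)" by blast
    then show ?thesis
    proof
      assume b1: "b \<in> S1 \<and> b \<notin> S2"
      then have ab: "a \<noteq> b" using a12 by blast
      have S1: "S1 = {a, b}" using le2_pair[OF l1] a12 b1 ab by blast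
      have "(b \<in> S3 \<and> b \<notin> S4) \<or> (b \<in> S4 \<and> b \<notin> S3)" using X[of b] b1 by blast
      then show ?thesis
      proof
        assume "b \<in> S3 \<and> b \<notin> S4"
        then have "S3 = {a, b}" using le2_pair[OF l3] a34 ab by blast
        then show ?thesis using S1 c13 by blast
      next
        assume "b \<in> S4 \<and> b \<notin> S3"
        then have "S4 = {a, b}" using le2_pair[OF l4] a34 ab by blast
        then show ?thesis using S1 c14 by blast
      qed
    next
      assume b2: "b \<in> S2 \<and> b \<notin> S1"
      then have ab: "a \<noteq> b" using a12 by blast
      have S2: "S2 = {a, b}" using le2_pair[OF l2] a12 b2 ab by blast
      have "(b \<in> S3 \<and> b \<notin> S4) \<or> (b \<in> S4 \<and> b \<notin> S3)" using X[of b] b2 by blast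
      then show ?thesis
      proof
        assume "b \<in> S3 \<and> b \<notin> S4"
        then have "S3 = {a, b}" using le2_pair[OF l3] a34 ab by blast
        then show ?thesis using S2 c23 by blast
      next
        assume "b \<in> S4 \<and> b \<notin> S3"
        then have "S4 = {a, b}" using le2_pair[OF l4] a34 ab by blast
        then show ?thesis using S2 c24 by blast
      qed
    qed
  qed
qed

lemma lookup_img_var_Some:
  assumes "finite S"
  shows "Poly_Mapping.lookup (mono_img (Poly_Mapping.single S 1)) (Some j) = ind j S"
  unfolding img_var_finite[OF assms]
  using assms by (simp add: lookup_add lookup_sum lookup_single when_def)

lemma img_ind:
  assumes "finite S1" "finite S2" "finite S3" "finite S4"
    and im: "mono_img (Poly_Mapping.single S1 1 + Poly_Mapping.single S2 1) = mono_img (Poly_Mapping.single S3 1 + Poly_Mapping.single S4 1)"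
  shows "ind j S1 + ind j S2 = ind j S3 + ind j S4"
proof -
  have "Poly_Mapping.lookup (mono_img (Poly_Mapping.single S1 1 + Poly_Mapping.single S2 1)) (Some j) =
        Poly_Mapping.lookup (mono_img (Poly_Mapping.single S3 1 + Poly_Mapping.single S4 1)) (Some j)"
    using im by simp
  then show ?thesis
    by (simp only: mono_img_add lookup_add lookup_img_var_Some[OF assms(1)] lookup_img_var_Some[OF assms(2)]
        lookup_img_var_Some[OF assms(3)] lookup_img_var_Some[OF assms(4)])
qed

lemma stable_from_pairs:
  assumes G: "simple_graph_on d E" and S: "S \<subseteq> {1..d}" and P: "\<And>i j. i \<in> S \<Longrightarrow> j \<in> S \<Longrightarrow> i \<noteq> j \<Longrightarrow> {i, j} \<notin> E"
  shows "S \<in> stable_sets d E"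
  unfolding stable_sets_def
proof (intro CollectI conjI S ballI notI)
  fix e assume e: "e \<in> E" "e \<subseteq> S"
  then obtain i j where "e = {i, j}" "i \<noteq> j" using G unfolding simple_graph_on_def by blast
  then show False using P[of i j] e by auto
qed

lemma no_tri_le2:
  assumes "\<not> complement_has_triangle d E" "S \<in> stable_sets d E"
  shows "le2 S"
  unfolding le2_def
proof (intro ballI)
  fix x y z assume xyz: "x \<in> S" "y \<in> S" "z \<in> S"
  have r: "S \<subseteq> {1..d}" and ne: "\<forall>e\<in>E. \<not> e \<subseteq> S" using assms(2) unfolding stable_sets_def by auto
  show "x = y \<or> y = z \<or> x = z"
  proof (rule ccontr)
    assume "\<not> (x = y \<or> y = z \<or> x = z)"
    moreover have "{x, y} \<notin> E" "{y, z} \<notin> E" "{x, z} \<notin> E" using ne xyz by auto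
    ultimately show False using assms(1) r xyz unfolding complement_has_triangle_def by blast
  qed
qed

lemma JG_closed: "closed_ideal (RG d E) (JG d E :: (nat set, 'k::comm_ring_1) mpoly set)"
  unfolding JG_alt by (rule ig_closed[OF RG_subring])

lemma LG_closed: "closed_ideal (RG d E) (LG d E :: (nat set, 'k::comm_ring_1) mpoly set)"
  unfolding LG_alt by (rule ig_closed[OF RG_subring])

lemma zero_JG: "0 \<in> JG d E" unfolding JG_alt by (rule ig_zero)
lemma zero_LG: "0 \<in> LG d E" unfolding LG_alt by (rule ig_zero)

lemma no_tri_IG2_JG:
  assumes G: "simple_graph_on d E" and nt: "\<not> complement_has_triangle d E"
  shows "(IG2 d E :: (nat set, 'k::comm_ring_1) mpoly set) \<subseteq> JG d E"
  unfolding IG2_alt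
proof (rule ig_min[OF JG_closed], rule subsetI)
  fix p :: "(nat set, 'k) mpoly" assume p: "p \<in> IG2gens d E"
  show "p \<in> JG d E"
  proof (rule fiber[OF JG_closed])
    show "p \<in> IG d E" using p unfolding IG2gens_def by blast
    fix m m' assume m: "m \<in> Poly_Mapping.keys p" and m': "m' \<in> Poly_Mapping.keys p" and im: "mono_img m = mono_img m'"
    obtain S1 S2 where S12: "m = Poly_Mapping.single S1 1 + Poly_Mapping.single S2 1" "S1 \<in> stable_sets d E" "S2 \<in> stable_sets d E"
      using IG2gens_decomp[OF p m] by blast
    obtain S3 S4 where S34: "m' = Poly_Mapping.single S3 1 + Poly_Mapping.single S4 1" "S3 \<in> stable_sets d E" "S4 \<in> stable_sets d E"
      using IG2gens_decomp[OF p m'] by blast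
    have L: "ind j S1 + ind j S2 = ind j S3 + ind j S4" for j
      by (rule img_ind) (use S12 S34 im stable_finite in auto)
    show "(mon m - mon m' :: (nat set, 'k) mpoly) \<in> JG d E"
    proof (cases "S1 \<inter> S2 = {}")
      case True
      have d34: "S3 \<inter> S4 = {}"
      proof (rule ccontr)
        assume "S3 \<inter> S4 \<noteq> {}"
        then obtain j where "j \<in> S3" "j \<in> S4" by blast
        then show False using L[of j] True by (cases "j \<in> S1"; cases "j \<in> S2") auto
      qed
      have U: "S1 \<union> S2 = S3 \<union> S4"
      proof
        show "S1 \<union> S2 \<subseteq> S3 \<union> S4"
        proof
          fix j assume "j \<in> S1 \<union> S2" then show "j \<in> S3 \<union> S4"
            using L[of j] by (cases "j \<in> S3"; cases "j \<in> S4") auto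
        qed
        show "S3 \<union> S4 \<subseteq> S1 \<union> S2"
        proof
          fix j assume "j \<in> S3 \<union> S4" then show "j \<in> S1 \<union> S2"
            using L[of j] by (cases "j \<in> S1"; cases "j \<in> S2") auto
        qed
      qed
      have "(var S1 * var S2 - var S3 * var S4 :: (nat set, 'k) mpoly) \<in> JG d E"
        by (rule Jgen_in_JG) (use S12 S34 True d34 U in auto)
      then show ?thesis using S12(1) S34(1) by (simp add: var_mult_var)
    next
      case False
      have "(S1 = S3 \<and> S2 = S4) \<or> (S1 = S4 \<and> S2 = S3)"
        by (rule comb_c[OF L no_tri_le2[OF nt] no_tri_le2[OF nt] no_tri_le2[OF nt] no_tri_le2[OF nt] False])
           (use S12 S34 in auto)
      then have "m = m'" using S12(1) S34(1) by (auto simp: add.commute)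
      then show ?thesis using zero_JG by simp
    qed
  qed
qed

lemma tri_not_eq:
  assumes G: "simple_graph_on d E" and t: "complement_has_triangle d E"
  shows "(IG2 d E :: (nat set, 'k::comm_ring_1) mpoly set) \<noteq> JG d E"
proof -
  obtain a b c where abc: "a \<in> {1..d}" "b \<in> {1..d}" "c \<in> {1..d}" "a \<noteq> b" "b \<noteq> c" "a \<noteq> c"
    "{a, b} \<notin> E" "{b, c} \<notin> E" "{a, c} \<notin> E"
    using t unfolding complement_has_triangle_def by blast
  have st: "{a, b, c} \<in> stable_sets d E"
    by (rule stable_from_pairs[OF G]) (use abc in \<open>auto simp: insert_commute\<close>)
  have s1: "{a, b} \<in> stable_sets d E" "{a, c} \<in> stable_sets d E" "{a} \<in> stable_sets d E"
    using stable_subset[OF st] by auto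
  let ?M0 = "Poly_Mapping.single {a, b} 1 + Poly_Mapping.single {a, c} (1::nat)"
  let ?M2 = "Poly_Mapping.single {a} 1 + Poly_Mapping.single {a, b, c} (1::nat)"
  define q where "q = (var {a, b} * var {a, c} - var {a} * var {a, b, c} :: (nat set, 'k) mpoly)"
  have qm: "q = mon ?M0 - mon ?M2" unfolding q_def by (simp add: var_mult_var)
  have img: "mono_img ?M0 = mono_img ?M2"
    using abc by (simp add: mono_img_add mono_img_single ac_simps)
  have "q \<in> IG d E"
    unfolding IG_def q_def using binom_RG[OF s1(1,2) s1(3) st] img by (simp add: piG_binom)
  moreover have "homogeneous_of_deg 2 q" unfolding q_def by (rule homog_binom)
  ultimately have "q \<in> IG2gens d E" unfolding IG2gens_def by blast
  then have qI: "q \<in> IG2 d E" unfolding IG2_alt by (rule ig_gen[OF RG_subring])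
  have neq: "?M2 \<noteq> ?M0"
  proof
    assume "?M2 = ?M0"
    then have "({a} = {a, b} \<and> {a, b, c} = {a, c}) \<or> ({a} = {a, c} \<and> {a, b, c} = {a, b})" by (rule pair_eq)
    then show False using abc by (auto simp: doubleton_eq_iff)
  qed
  have "Poly_Mapping.lookup q ?M0 = 1"
    unfolding qm using neq by (simp add: lookup_minus mon_def lookup_single when_def)
  moreover have "Poly_Mapping.lookup p ?M0 = 0" if "p \<in> JG d E" for p :: "(nat set, 'k) mpoly"
  proof (rule ig_lookup_zero[OF that[unfolded JG_alt]])
    fix g r assume "g \<in> Jgens d E"
    then obtain S1 S2 S3 S4 where g: "g = var S1 * var S2 - var S3 * var S4"
      and D: "S1 \<inter> S2 = {}" "S3 \<inter> S4 = {}"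
      unfolding Jgens_def by blast
    have n1: "Poly_Mapping.single S1 1 + Poly_Mapping.single S2 1 \<noteq> ?M0"
    proof
      assume "Poly_Mapping.single S1 1 + Poly_Mapping.single S2 1 = ?M0"
      then have "(S1 = {a, b} \<and> S2 = {a, c}) \<or> (S1 = {a, c} \<and> S2 = {a, b})" by (rule pair_eq)
      then show False using D by auto
    qed
    have n2: "Poly_Mapping.single S3 1 + Poly_Mapping.single S4 1 \<noteq> ?M0"
    proof
      assume "Poly_Mapping.single S3 1 + Poly_Mapping.single S4 1 = ?M0"
      then have "(S3 = {a, b} \<and> S4 = {a, c}) \<or> (S3 = {a, c} \<and> S4 = {a, b})" by (rule pair_eq)
      then show False using D by auto
    qed
    show "Poly_Mapping.lookup (r * g) ?M0 = 0"
      unfolding g var_mult_var by (rule coeff_binom_zero) (use n1 n2 in \<open>simp_all add: monom_deg_add\<close>)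
  qed
  ultimately show ?thesis using qI by (metis zero_neq_one)
qed

lemma part_c:
  assumes G: "simple_graph_on d E"
  shows "((IG2 d E :: (nat set, 'k::comm_ring_1) mpoly set) = JG d E \<longleftrightarrow> \<not> complement_has_triangle d E)"
proof
  assume "(IG2 d E :: (nat set, 'k) mpoly set) = JG d E"
  then show "\<not> complement_has_triangle d E" using tri_not_eq[OF G] by blast
next
  assume "\<not> complement_has_triangle d E"
  then have "(IG2 d E :: (nat set, 'k) mpoly set) \<subseteq> JG d E" by (rule no_tri_IG2_JG[OF G])
  then show "(IG2 d E :: (nat set, 'k) mpoly set) = JG d E" using JG_IG2[of d E] by (rule subset_antisym)
qed



definition nadj :: "nat set set \<Rightarrow> nat \<Rightarrow> nat \<Rightarrow> bool" where
  "nadj E i j \<longleftrightarrow> i = j \<or> {i, j} \<notin> E"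

lemma nadj_sym: "nadj E i j = nadj E j i"
  unfolding nadj_def by (auto simp: insert_commute)

lemma part_unique:
  assumes "partition_on A P" "V \<in> P" "V' \<in> P" "x \<in> V" "x \<in> V'"
  shows "V = V'"
  using assms partition_onD2[OF assms(1)] unfolding pairwise_def disjnt_def by blast

lemma mp_nadj:
  assumes mp: "complete_multipartite_wrt d E P" and x: "x \<in> {1..d}" and y: "y \<in> {1..d}"
  shows "nadj E x y \<longleftrightarrow> (\<exists>V\<in>P. x \<in> V \<and> y \<in> V)"
proof (cases "x = y")
  case True
  have "\<Union>P = {1..d}" using mp unfolding complete_multipartite_wrt_def partition_on_def by blast
  then show ?thesis using True x unfolding nadj_def by blast
next
  case False
  then show ?thesis using mp x y unfolding complete_multipartite_wrt_def nadj_def by blast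
qed

lemma stable_nadj:
  assumes "S \<in> stable_sets d E" "x \<in> S" "y \<in> S" shows "nadj E x y"
proof -
  have ne: "\<forall>e\<in>E. \<not> e \<subseteq> S" using assms(1) unfolding stable_sets_def by blast
  have "{x, y} \<subseteq> S" using assms(2,3) by simp
  then have "{x, y} \<notin> E" using ne by blast
  then show ?thesis by (simp add: nadj_def)
qed

lemma stable_in_part:
  assumes mp: "complete_multipartite_wrt d E P" and S: "S \<in> stable_sets d E" and x: "x \<in> S"
  shows "\<exists>V\<in>P. x \<in> V \<and> S \<subseteq> V"
proof -
  have pt: "partition_on {1..d} P" using mp unfolding complete_multipartite_wrt_def by blast
  have xd: "x \<in> {1..d}" using S x stable_sub_range by blast
  then obtain V where V: "V \<in> P" "x \<in> V" using pt unfolding partition_on_def by blast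
  have "S \<subseteq> V"
  proof
    fix y assume y: "y \<in> S"
    have yd: "y \<in> {1..d}" using S y stable_sub_range by blast
    obtain V' where "V' \<in> P" "x \<in> V'" "y \<in> V'"
      using mp_nadj[OF mp xd yd] stable_nadj[OF S x y] by blast
    then show "y \<in> V" using part_unique[OF pt V(1) _ V(2)] by blast
  qed
  then show ?thesis using V by blast
qed

lemma part_finite:
  assumes mp: "complete_multipartite_wrt d E P" and V: "V \<in> P" shows "finite V"
proof -
  have "V \<subseteq> {1..d}" using mp V unfolding complete_multipartite_wrt_def partition_on_def by blast
  then show ?thesis by (rule finite_subset) simp
qed

lemma stable_card3:
  assumes mp: "complete_multipartite_wrt d E P" and c: "\<forall>V\<in>P. card V \<le> 3" and S: "S \<in> stable_sets d E"
  shows "card S \<le> 3"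
proof (cases "S = {}")
  case True then show ?thesis by simp
next
  case False
  then obtain x where "x \<in> S" by blast
  then obtain V where V: "V \<in> P" "S \<subseteq> V" using stable_in_part[OF mp S] by blast
  then have "card S \<le> card V" by (intro card_mono[OF part_finite[OF mp V(1)]]) simp
  then show ?thesis using c V by fastforce
qed

lemma L_pair:
  assumes G: "simple_graph_on d E" and S1: "S1 \<in> stable_sets d E" and S2: "S2 \<in> stable_sets d E"
    and D: "S1 \<inter> S2 = {}" and U: "S1 \<union> S2 \<in> stable_sets d E" and c: "card (S1 \<union> S2) \<le> 3"
  shows "(var S1 * var S2 - var (S1 \<union> S2) * var {} :: (nat set, 'k::comm_ring_1) mpoly) \<in> LG d E"
proof -
  consider "S1 = {}" | "S2 = {}" | "S1 \<noteq> {}" "S2 \<noteq> {}" by blast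
  then show ?thesis
  proof cases
    case 1 then show ?thesis using zero_LG by (simp add: mult.commute)
  next
    case 2 then show ?thesis using zero_LG by simp
  next
    case 3
    have f: "finite S1" "finite S2" using S1 S2 stable_finite by blast+
    have cs: "card S1 + card S2 \<le> 3" using c card_Un_disjoint[OF f D] by simp
    have p: "card S1 \<ge> 1" "card S2 \<ge> 1" using 3 f by (simp_all add: Suc_le_eq card_gt_0_iff)
    then consider "card S1 = 1" | "card S2 = 1" using cs by linarith
    then show ?thesis
    proof cases
      case 1
      then obtain i where i: "S1 = {i}" by (rule card_1_singletonE)
      have e: "S1 \<union> S2 - {i} = S2" using i D by auto
      have "(var (S1 \<union> S2 - {i}) * var {i} - var (S1 \<union> S2) * var {} :: (nat set, 'k) mpoly) \<in> LG d E"
        by (rule Lgen_in_LG[OF U]) (use i p cs card_Un_disjoint[OF f D] in auto)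
      then have "(var S2 * var {i} - var (S1 \<union> S2) * var {} :: (nat set, 'k) mpoly) \<in> LG d E"
        unfolding e .
      then show ?thesis by (simp add: i mult.commute)
    next
      case 2
      then obtain i where i: "S2 = {i}" by (rule card_1_singletonE)
      have e: "S1 \<union> S2 - {i} = S1" using i D by auto
      have "(var (S1 \<union> S2 - {i}) * var {i} - var (S1 \<union> S2) * var {} :: (nat set, 'k) mpoly) \<in> LG d E"
        by (rule Lgen_in_LG[OF U]) (use i p cs card_Un_disjoint[OF f D] in auto)
      then have "(var S1 * var {i} - var (S1 \<union> S2) * var {} :: (nat set, 'k) mpoly) \<in> LG d E"
        unfolding e .
      then show ?thesis by (simp add: i)
    qed
  qed
qed

lemma Jgen_LG_mp:
  assumes G: "simple_graph_on d E" and mp: "complete_multipartite_wrt d E P" and c3: "\<forall>V\<in>P. card V \<le> 3"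
    and S: "S1 \<in> stable_sets d E" "S2 \<in> stable_sets d E" "S3 \<in> stable_sets d E" "S4 \<in> stable_sets d E"
    and D: "S1 \<inter> S2 = {}" "S3 \<inter> S4 = {}" and U: "S1 \<union> S2 = S3 \<union> S4"
  shows "(var S1 * var S2 - var S3 * var S4 :: (nat set, 'k::comm_ring_1) mpoly) \<in> LG d E"
proof (cases "S1 \<union> S2 \<in> stable_sets d E")
  case True
  have c: "card (S1 \<union> S2) \<le> 3" by (rule stable_card3[OF mp c3 True])
  have a: "(var S1 * var S2 - var (S1 \<union> S2) * var {} :: (nat set, 'k) mpoly) \<in> LG d E"
    by (rule L_pair[OF G S(1,2) D(1) True c])
  have b: "(var S3 * var S4 - var (S3 \<union> S4) * var {} :: (nat set, 'k) mpoly) \<in> LG d E"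
    by (rule L_pair[OF G S(3,4) D(2)]) (use True c U in auto)
  have "(var S1 * var S2 - var (S1 \<union> S2) * var {}) - (var S3 * var S4 - var (S3 \<union> S4) * var {})
     = (var S1 * var S2 - var S3 * var S4 :: (nat set, 'k) mpoly)" using U by simp
  then show ?thesis using ig_diff[OF RG_subring a[unfolded LG_alt] b[unfolded LG_alt]] unfolding LG_alt by simp
next
  case False
  have pt: "partition_on {1..d} P" using mp unfolding complete_multipartite_wrt_def by blast
  have Ud: "S1 \<union> S2 \<subseteq> {1..d}" using S(1,2) stable_sub_range by blast
  then obtain e where e: "e \<in> E" "e \<subseteq> S1 \<union> S2" using False unfolding stable_sets_def by blast
  then obtain p q where pq: "e = {p, q}" "p \<noteq> q" using G unfolding simple_graph_on_def by blast
  have n1: "\<not> e \<subseteq> S1" "\<not> e \<subseteq> S2" using S(1,2) e(1) unfolding stable_sets_def by blast+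
  obtain p' q' where pq': "p' \<in> S1" "q' \<in> S2" "{p', q'} \<in> E"
  proof (cases "p \<in> S1")
    case True
    then have "q \<in> S2" using n1 e pq by blast
    then show ?thesis using that True e pq by blast
  next
    case False
    then have "p \<in> S2" "q \<in> S1" using n1 e pq by blast+
    then show ?thesis using that e pq by (metis insert_commute)
  qed
  obtain V1 where V1: "V1 \<in> P" "p' \<in> V1" "S1 \<subseteq> V1" using stable_in_part[OF mp S(1) pq'(1)] by blast
  obtain V2 where V2: "V2 \<in> P" "q' \<in> V2" "S2 \<subseteq> V2" using stable_in_part[OF mp S(2) pq'(2)] by blast
  have "\<not> nadj E p' q'" using pq' D(1) unfolding nadj_def by blast
  moreover have "p' \<in> {1..d}" "q' \<in> {1..d}" using pq'(1,2) Ud by blast+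
  ultimately have V12: "V1 \<noteq> V2" using mp_nadj[OF mp] V1 V2 by blast
  have sub: "S \<subseteq> S1 \<or> S \<subseteq> S2" if SS: "S \<in> stable_sets d E" "S \<subseteq> S1 \<union> S2" for S
  proof (rule ccontr)
    assume "\<not> (S \<subseteq> S1 \<or> S \<subseteq> S2)"
    then obtain x y where xy: "x \<in> S" "x \<in> S1" "y \<in> S" "y \<in> S2" using SS(2) by blast
    obtain V where V: "V \<in> P" "S \<subseteq> V" using stable_in_part[OF mp SS(1) xy(1)] by blast
    have "V = V1" using part_unique[OF pt V(1) V1(1)] xy V V1 by blast
    moreover have "V = V2" using part_unique[OF pt V(1) V2(1)] xy V V2 by blast
    ultimately show False using V12 by blast
  qed
  have s3: "S3 \<subseteq> S1 \<or> S3 \<subseteq> S2" by (rule sub[OF S(3)]) (use U in blast)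
  have s4: "S4 \<subseteq> S1 \<or> S4 \<subseteq> S2" by (rule sub[OF S(4)]) (use U in blast)
  have "(S1 = S3 \<and> S2 = S4) \<or> (S1 = S4 \<and> S2 = S3)"
    using s3 s4 U D pq'(1,2) by blast
  then have "(var S1 * var S2 - var S3 * var S4 :: (nat set, 'k) mpoly) = 0"
    by (auto simp: mult.commute)
  then show ?thesis using zero_LG by simp
qed

lemma mp_JG_LG:
  assumes G: "simple_graph_on d E" and mp: "complete_multipartite_wrt d E P" and c3: "\<forall>V\<in>P. card V \<le> 3"
  shows "(JG d E :: (nat set, 'k::comm_ring_1) mpoly set) = LG d E"
proof
  show "LG d E \<subseteq> (JG d E :: (nat set, 'k) mpoly set)" by (rule LG_JG)
  show "(JG d E :: (nat set, 'k) mpoly set) \<subseteq> LG d E"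
    unfolding JG_alt
  proof (rule ig_min[OF LG_closed], rule subsetI)
    fix g :: "(nat set, 'k) mpoly" assume "g \<in> Jgens d E"
    then obtain S1 S2 S3 S4 where g: "g = var S1 * var S2 - var S3 * var S4"
      and S: "S1 \<in> stable_sets d E" "S2 \<in> stable_sets d E" "S3 \<in> stable_sets d E" "S4 \<in> stable_sets d E"
        "S1 \<inter> S2 = {}" "S3 \<inter> S4 = {}" "S1 \<union> S2 = S3 \<union> S4"
      unfolding Jgens_def by blast
    show "g \<in> LG d E" unfolding g by (rule Jgen_LG_mp[OF G mp c3 S])
  qed
qed



lemma JG_ne_LG:
  fixes q :: "(nat set, 'k::comm_ring_1) mpoly"
  assumes q: "q \<in> JG d E" and l: "Poly_Mapping.lookup q M0 \<noteq> 0" and dg: "monom_deg M0 = 2"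
    and H: "\<And>S i. S \<in> stable_sets d E \<Longrightarrow> i \<in> S \<Longrightarrow> card S \<ge> 2 \<Longrightarrow>
       Poly_Mapping.single (S - {i}) 1 + Poly_Mapping.single {i} 1 \<noteq> M0 \<and> Poly_Mapping.single S 1 + Poly_Mapping.single {} 1 \<noteq> M0"
  shows "(JG d E :: (nat set, 'k) mpoly set) \<noteq> LG d E"
proof
  assume "(JG d E :: (nat set, 'k) mpoly set) = LG d E"
  then have "q \<in> ideal_gen (RG d E) (Lgens d E)" using q unfolding LG_alt by simp
  then have "Poly_Mapping.lookup q M0 = 0"
  proof (rule ig_lookup_zero)
    fix g r assume "g \<in> (Lgens d E :: (nat set, 'k) mpoly set)"
    then obtain i S where g: "g = var (S - {i}) * var {i} - var S * var {}"
      and S: "S \<in> stable_sets d E" "i \<in> S" "2 \<le> card S"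
      unfolding Lgens_def by blast
    have n: "Poly_Mapping.single (S - {i}) 1 + Poly_Mapping.single {i} 1 \<noteq> M0"
      "Poly_Mapping.single S 1 + Poly_Mapping.single {} 1 \<noteq> M0" using H[OF S] by blast+
    show "Poly_Mapping.lookup (r * g) M0 = 0"
      unfolding g var_mult_var by (rule coeff_binom_zero) (use n dg in \<open>simp_all add: monom_deg_add\<close>)
  qed
  then show False using l by simp
qed

lemma stable_pair:
  assumes G: "simple_graph_on d E" "a \<in> {1..d}" "b \<in> {1..d}" "{a, b} \<notin> E"
  shows "{a, b} \<in> stable_sets d E"
  by (rule stable_from_pairs[OF G(1)]) (use assms in \<open>auto simp: insert_commute\<close>)

lemma lookup_binom_M0:
  assumes "M2 \<noteq> M0"
  shows "Poly_Mapping.lookup (mon M0 - mon M2 :: ('v, 'k::comm_ring_1) mpoly) M0 = 1"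
  using assms by (simp add: lookup_minus mon_def lookup_single when_def)

lemma bad_triple:
  assumes G: "simple_graph_on d E" and abc: "a \<in> {1..d}" "b \<in> {1..d}" "c \<in> {1..d}" "a \<noteq> b" "b \<noteq> c" "a \<noteq> c"
    and E: "{a, b} \<notin> E" "{b, c} \<notin> E" "{a, c} \<in> E"
  shows "(JG d E :: (nat set, 'k::comm_ring_1) mpoly set) \<noteq> LG d E"
proof -
  have st: "{a, b} \<in> stable_sets d E" "{b, c} \<in> stable_sets d E" "{a} \<in> stable_sets d E" "{c} \<in> stable_sets d E"
    using stable_pair[OF G abc(1,2) E(1)] stable_pair[OF G abc(2,3) E(2)] stable_singleton[OF G abc(1)]
      stable_singleton[OF G abc(3)] by auto
  let ?M0 = "Poly_Mapping.single {a, b} 1 + Poly_Mapping.single {c} (1::nat)"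
  let ?M2 = "Poly_Mapping.single {b, c} 1 + Poly_Mapping.single {a} (1::nat)"
  have q: "(var {a, b} * var {c} - var {b, c} * var {a} :: (nat set, 'k) mpoly) \<in> JG d E"
    by (rule Jgen_in_JG[OF st(1,4,2,3)]) (use abc in auto)
  have neq: "?M2 \<noteq> ?M0"
  proof
    assume "?M2 = ?M0"
    then have "({b, c} = {a, b} \<and> {a} = {c}) \<or> ({b, c} = {c} \<and> {a} = {a, b})" by (rule pair_eq)
    then show False using abc by (auto simp: doubleton_eq_iff)
  qed
  show ?thesis
  proof (rule JG_ne_LG[OF q])
    show "Poly_Mapping.lookup (var {a, b} * var {c} - var {b, c} * var {a} :: (nat set, 'k) mpoly) ?M0 \<noteq> 0"
      unfolding var_mult_var using lookup_binom_M0[OF neq, where 'k='k] by simp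
    show "monom_deg ?M0 = 2" by (simp add: monom_deg_add)
    fix S i assume S: "S \<in> stable_sets d E" "i \<in> S" "2 \<le> card S"
    show "Poly_Mapping.single (S - {i}) 1 + Poly_Mapping.single {i} 1 \<noteq> ?M0 \<and> Poly_Mapping.single S 1 + Poly_Mapping.single {} 1 \<noteq> ?M0"
    proof
      show "Poly_Mapping.single (S - {i}) 1 + Poly_Mapping.single {i} 1 \<noteq> ?M0"
      proof
        assume "Poly_Mapping.single (S - {i}) 1 + Poly_Mapping.single {i} 1 = ?M0"
        then have "(S - {i} = {a, b} \<and> {i} = {c}) \<or> (S - {i} = {c} \<and> {i} = {a, b})" by (rule pair_eq)
        then show False
        proof
          assume h: "S - {i} = {a, b} \<and> {i} = {c}"
          then have "S = {a, b, c}" using S(2) by blast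
          then have "{a, c} \<subseteq> S" by blast
          then show False using S(1) E(3) unfolding stable_sets_def by blast
        next
          assume "S - {i} = {c} \<and> {i} = {a, b}"
          then show False using abc by (auto simp: doubleton_eq_iff)
        qed
      qed
      show "Poly_Mapping.single S 1 + Poly_Mapping.single {} 1 \<noteq> ?M0"
      proof
        assume "Poly_Mapping.single S 1 + Poly_Mapping.single {} 1 = ?M0"
        then have "(S = {a, b} \<and> {} = {c}) \<or> (S = {c} \<and> {} = {a, b})" by (rule pair_eq)
        then show False by blast
      qed
    qed
  qed
qed

lemma four_indep:
  assumes G: "simple_graph_on d E" and X: "a \<in> {1..d}" "b \<in> {1..d}" "c \<in> {1..d}" "e \<in> {1..d}"
    and D: "a \<noteq> b" "a \<noteq> c" "a \<noteq> e" "b \<noteq> c" "b \<noteq> e" "c \<noteq> e"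
    and N: "{a, b} \<notin> E" "{a, c} \<notin> E" "{a, e} \<notin> E" "{b, c} \<notin> E" "{b, e} \<notin> E" "{c, e} \<notin> E"
  shows "(JG d E :: (nat set, 'k::comm_ring_1) mpoly set) \<noteq> LG d E"
proof -
  have st: "{a, b} \<in> stable_sets d E" "{c, e} \<in> stable_sets d E" "{a, c} \<in> stable_sets d E" "{b, e} \<in> stable_sets d E"
    using stable_pair[OF G X(1,2) N(1)] stable_pair[OF G X(3,4) N(6)] stable_pair[OF G X(1,3) N(2)]
      stable_pair[OF G X(2,4) N(5)] by auto
  let ?M0 = "Poly_Mapping.single {a, b} 1 + Poly_Mapping.single {c, e} (1::nat)"
  let ?M2 = "Poly_Mapping.single {a, c} 1 + Poly_Mapping.single {b, e} (1::nat)"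
  have q: "(var {a, b} * var {c, e} - var {a, c} * var {b, e} :: (nat set, 'k) mpoly) \<in> JG d E"
    by (rule Jgen_in_JG[OF st]) (use D in auto)
  have neq: "?M2 \<noteq> ?M0"
  proof
    assume "?M2 = ?M0"
    then have "({a, c} = {a, b} \<and> {b, e} = {c, e}) \<or> ({a, c} = {c, e} \<and> {b, e} = {a, b})" by (rule pair_eq)
    then show False using D by (auto simp: doubleton_eq_iff)
  qed
  show ?thesis
  proof (rule JG_ne_LG[OF q])
    show "Poly_Mapping.lookup (var {a, b} * var {c, e} - var {a, c} * var {b, e} :: (nat set, 'k) mpoly) ?M0 \<noteq> 0"
      unfolding var_mult_var using lookup_binom_M0[OF neq, where 'k='k] by simp
    show "monom_deg ?M0 = 2" by (simp add: monom_deg_add)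
    fix S i assume S: "S \<in> stable_sets d E" "i \<in> S" "2 \<le> card S"
    show "Poly_Mapping.single (S - {i}) 1 + Poly_Mapping.single {i} 1 \<noteq> ?M0 \<and> Poly_Mapping.single S 1 + Poly_Mapping.single {} 1 \<noteq> ?M0"
    proof
      show "Poly_Mapping.single (S - {i}) 1 + Poly_Mapping.single {i} 1 \<noteq> ?M0"
      proof
        assume "Poly_Mapping.single (S - {i}) 1 + Poly_Mapping.single {i} 1 = ?M0"
        then have "(S - {i} = {a, b} \<and> {i} = {c, e}) \<or> (S - {i} = {c, e} \<and> {i} = {a, b})" by (rule pair_eq)
        then show False using D by (auto simp: doubleton_eq_iff)
      qed
      show "Poly_Mapping.single S 1 + Poly_Mapping.single {} 1 \<noteq> ?M0"
      proof
        assume "Poly_Mapping.single S 1 + Poly_Mapping.single {} 1 = ?M0"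
        then have "(S = {a, b} \<and> {} = {c, e}) \<or> (S = {c, e} \<and> {} = {a, b})" by (rule pair_eq)
        then show False by blast
      qed
    qed
  qed
qed



lemma four_elems:
  assumes "finite V" "card V \<ge> 4"
  shows "\<exists>a b c e. a \<in> V \<and> b \<in> V \<and> c \<in> V \<and> e \<in> V \<and> a \<noteq> b \<and> a \<noteq> c \<and> a \<noteq> e \<and> b \<noteq> c \<and> b \<noteq> e \<and> c \<noteq> e"
proof -
  obtain xs where xs: "set xs = V" "distinct xs" using finite_distinct_list[OF assms(1)] by blast
  have len: "length xs \<ge> 4" using distinct_card[OF xs(2)] xs(1) assms(2) by simp
  have xne: "xs \<noteq> []" using len by auto
  have m: "xs ! i \<in> V" if "i < length xs" for i using that xs(1) nth_mem by blast
  have n: "xs ! i \<noteq> xs ! j" if "i < length xs" "j < length xs" "i \<noteq> j" for i j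
    using that nth_eq_iff_index_eq[OF xs(2)] by blast
  show ?thesis
    by (rule exI[of _ "xs ! 0"], rule exI[of _ "xs ! 1"], rule exI[of _ "xs ! 2"], rule exI[of _ "xs ! 3"])
       (use len[unfolded numeral_eq_Suc] m[of 0] m[of 1] m[of 2] m[of 3] n[of 0 1] n[of 0 2] n[of 0 3] n[of 1 2] n[of 1 3] n[of 2 3] xne in simp)
qed

lemma build_P:
  assumes G: "simple_graph_on d E"
    and T: "\<And>a b c. a \<in> {1..d} \<Longrightarrow> b \<in> {1..d} \<Longrightarrow> c \<in> {1..d} \<Longrightarrow> nadj E a b \<Longrightarrow> nadj E b c \<Longrightarrow> nadj E a c"
    and F: "\<And>a b c e. a \<in> {1..d} \<Longrightarrow> b \<in> {1..d} \<Longrightarrow> c \<in> {1..d} \<Longrightarrow> e \<in> {1..d} \<Longrightarrow>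
      a \<noteq> b \<Longrightarrow> a \<noteq> c \<Longrightarrow> a \<noteq> e \<Longrightarrow> b \<noteq> c \<Longrightarrow> b \<noteq> e \<Longrightarrow> c \<noteq> e \<Longrightarrow>
      {a, b} \<notin> E \<Longrightarrow> {a, c} \<notin> E \<Longrightarrow> {a, e} \<notin> E \<Longrightarrow> {b, c} \<notin> E \<Longrightarrow> {b, e} \<notin> E \<Longrightarrow> {c, e} \<notin> E \<Longrightarrow> False"
  shows "\<exists>P. complete_multipartite_wrt d E P \<and> (\<forall>V\<in>P. card V \<le> 3)"
proof -
  define cls where "cls i = {j \<in> {1..d}. nadj E i j}" for i
  define P where "P = cls ` {1..d}"
  have refl: "nadj E i i" for i by (simp add: nadj_def)
  have ne: "a \<noteq> b \<Longrightarrow> nadj E a b \<Longrightarrow> {a, b} \<notin> E" for a b by (simp add: nadj_def)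
  have clsd: "cls i \<subseteq> {1..d}" for i unfolding cls_def by blast
  have self: "i \<in> cls i" if "i \<in> {1..d}" for i using that refl unfolding cls_def by blast
  have cls_eq: "cls i = cls j" if ij: "i \<in> {1..d}" "j \<in> {1..d}" and k: "k \<in> cls i" "k \<in> cls j" for i j k
  proof -
    have kd: "k \<in> {1..d}" and ik: "nadj E i k" and jk: "nadj E j k" using k unfolding cls_def by auto
    have ji: "nadj E j i" using T[OF ij(2) kd ij(1) jk] ik nadj_sym by metis
    have ij': "nadj E i j" using ji nadj_sym by metis
    show ?thesis
    proof
      show "cls i \<subseteq> cls j" unfolding cls_def using T[OF ij(2) ij(1)] ji by blast
      show "cls j \<subseteq> cls i" unfolding cls_def using T[OF ij(1) ij(2)] ij' by blast
    qed
  qed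
  have pt: "partition_on {1..d} P"
  proof (rule partition_onI)
    show "\<Union>P = {1..d}" unfolding P_def using clsd self by blast
    show "{} \<notin> P" unfolding P_def using self by blast
    fix p q assume pq: "p \<in> P" "q \<in> P" "p \<noteq> q"
    then obtain i j where "i \<in> {1..d}" "j \<in> {1..d}" "p = cls i" "q = cls j" unfolding P_def by blast
    then show "disjnt p q" using cls_eq pq(3) unfolding disjnt_def by blast
  qed
  have mp: "complete_multipartite_wrt d E P"
    unfolding complete_multipartite_wrt_def
  proof (intro conjI pt ballI impI)
    fix i j assume ij: "i \<in> {1..d}" "j \<in> {1..d}" "i \<noteq> j"
    show "({i, j} \<in> E) = (\<not> (\<exists>V\<in>P. i \<in> V \<and> j \<in> V))"
    proof
      assume e: "{i, j} \<in> E"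
      show "\<not> (\<exists>V\<in>P. i \<in> V \<and> j \<in> V)"
      proof
        assume "\<exists>V\<in>P. i \<in> V \<and> j \<in> V"
        then obtain k where k: "k \<in> {1..d}" "i \<in> cls k" "j \<in> cls k" unfolding P_def by blast
        then have "nadj E k i" "nadj E k j" unfolding cls_def by auto
        then have "nadj E i j" using T[OF ij(1) k(1) ij(2)] nadj_sym by metis
        then show False using ne[OF ij(3)] e by blast
      qed
    next
      assume "\<not> (\<exists>V\<in>P. i \<in> V \<and> j \<in> V)"
      then have "j \<notin> cls i" using self[OF ij(1)] ij(1) unfolding P_def by blast
      then show "{i, j} \<in> E" using ij(2) unfolding cls_def nadj_def by blast
    qed
  qed
  have c3: "\<forall>V\<in>P. card V \<le> 3"
  proof
    fix V assume "V \<in> P"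
    then obtain k where k: "k \<in> {1..d}" "V = cls k" unfolding P_def by blast
    have fV: "finite V" using clsd k(2) finite_subset[of V "{1..d}"] by simp
    show "card V \<le> 3"
    proof (rule ccontr)
      assume "\<not> card V \<le> 3"
      then have "card V \<ge> 4" by simp
      then obtain a b c e where abce: "a \<in> V" "b \<in> V" "c \<in> V" "e \<in> V"
        and D: "a \<noteq> b" "a \<noteq> c" "a \<noteq> e" "b \<noteq> c" "b \<noteq> e" "c \<noteq> e"
        using four_elems[OF fV] by blast
      have inD: "a \<in> {1..d}" "b \<in> {1..d}" "c \<in> {1..d}" "e \<in> {1..d}" using abce clsd k(2) by blast+
      have kx: "nadj E k x" if "x \<in> V" for x using that k(2) unfolding cls_def by blast
      have pw: "nadj E x y" if "x \<in> V" "y \<in> V" for x y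
      proof -
        have "nadj E x k" using kx[OF that(1)] nadj_sym by metis
        moreover have "x \<in> {1..d}" "y \<in> {1..d}" using that clsd k(2) by blast+
        ultimately show ?thesis using T[OF _ k(1)] kx[OF that(2)] by blast
      qed
      show False
        by (rule F[OF inD D]) (use ne pw abce D in blast)+
    qed
  qed
  show ?thesis using mp c3 by blast
qed

lemma part_d:
  assumes G: "simple_graph_on d E"
  shows "((JG d E :: (nat set, 'k::comm_ring_1) mpoly set) = LG d E \<longleftrightarrow>
            (\<exists>P. complete_multipartite_wrt d E P \<and> (\<forall>V\<in>P. card V \<le> 3)))"
proof
  assume eq: "(JG d E :: (nat set, 'k) mpoly set) = LG d E"
  show "\<exists>P. complete_multipartite_wrt d E P \<and> (\<forall>V\<in>P. card V \<le> 3)"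
  proof (rule build_P[OF G])
    fix a b c assume abc: "a \<in> {1..d}" "b \<in> {1..d}" "c \<in> {1..d}" and ab: "nadj E a b" and bc: "nadj E b c"
    show "nadj E a c"
    proof (rule ccontr)
      assume nac: "\<not> nadj E a c"
      then have ac: "a \<noteq> c" "{a, c} \<in> E" unfolding nadj_def by auto
      have "a \<noteq> b" using nac bc by auto
      moreover have "b \<noteq> c" using nac ab by auto
      moreover have "{a, b} \<notin> E" "{b, c} \<notin> E" using ab bc calculation unfolding nadj_def by auto
      ultimately have "(JG d E :: (nat set, 'k) mpoly set) \<noteq> LG d E"
        using bad_triple[OF G abc _ _ ac(1) _ _ ac(2)] by blast
      then show False using eq by blast
    qed
  next
    fix a b c e
    assume X: "a \<in> {1..d}" "b \<in> {1..d}" "c \<in> {1..d}" "e \<in> {1..d}"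
      and D: "a \<noteq> b" "a \<noteq> c" "a \<noteq> e" "b \<noteq> c" "b \<noteq> e" "c \<noteq> e"
      and N: "{a, b} \<notin> E" "{a, c} \<notin> E" "{a, e} \<notin> E" "{b, c} \<notin> E" "{b, e} \<notin> E" "{c, e} \<notin> E"
    have "(JG d E :: (nat set, 'k) mpoly set) \<noteq> LG d E" by (rule four_indep[OF G X D N])
    then show False using eq by blast
  qed
next
  assume "\<exists>P. complete_multipartite_wrt d E P \<and> (\<forall>V\<in>P. card V \<le> 3)"
  then obtain P where "complete_multipartite_wrt d E P" "\<forall>V\<in>P. card V \<le> 3" by blast
  then show "(JG d E :: (nat set, 'k) mpoly set) = LG d E" using mp_JG_LG[OF G] by blast
qed

lemma part_a:
  assumes G: "simple_graph_on d E"
    and LI: "LG d E \<subseteq> I" and IIG: "I \<subseteq> (IG d E :: (nat set, 'k::field) mpoly set)"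
  shows "prime_ideal_in (RG d E) I \<longleftrightarrow> I = IG d E"
proof
  assume "prime_ideal_in (RG d E) I"
  then show "I = IG d E" by (rule prime_imp_IG[OF G _ LI IIG])
next
  assume "I = IG d E"
  then show "prime_ideal_in (RG d E) I" using IG_prime by simp
qed

theorem proposition4p3:
  fixes d :: nat and E :: "nat set set"
  assumes "simple_graph_on d E"
  shows "(prime_ideal_in (RG d E) (IG2 d E :: (nat set, 'k::field) mpoly set) \<longleftrightarrow> IG2 d E = (IG d E :: (nat set, 'k) mpoly set))
       \<and> (prime_ideal_in (RG d E) (JG d E :: (nat set, 'k) mpoly set) \<longleftrightarrow> JG d E = (IG d E :: (nat set, 'k) mpoly set))
       \<and> (prime_ideal_in (RG d E) (LG d E :: (nat set, 'k) mpoly set) \<longleftrightarrow> LG d E = (IG d E :: (nat set, 'k) mpoly set))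
       \<and> ((IG d E :: (nat set, 'k) mpoly set) = IG2 d E \<longleftrightarrow> generated_by_quadratic_binomials d E (IG d E :: (nat set, 'k) mpoly set))
       \<and> ((IG2 d E :: (nat set, 'k) mpoly set) = JG d E \<longleftrightarrow> \<not> complement_has_triangle d E)
       \<and> ((JG d E :: (nat set, 'k) mpoly set) = LG d E \<longleftrightarrow>
            (\<exists>P. complete_multipartite_wrt d E P \<and> (\<forall>V\<in>P. card V \<le> 3)))"
proof (intro conjI)
  have c1: "(LG d E :: (nat set, 'k) mpoly set) \<subseteq> JG d E" by (rule LG_JG)
  have c2: "(JG d E :: (nat set, 'k) mpoly set) \<subseteq> IG2 d E" by (rule JG_IG2)
  have c3: "(IG2 d E :: (nat set, 'k) mpoly set) \<subseteq> IG d E" by (rule IG2_IG)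
  show "prime_ideal_in (RG d E) (IG2 d E :: (nat set, 'k) mpoly set) \<longleftrightarrow> IG2 d E = (IG d E :: (nat set, 'k) mpoly set)"
    by (rule part_a[OF assms]) (use c1 c2 c3 in blast)+
  show "prime_ideal_in (RG d E) (JG d E :: (nat set, 'k) mpoly set) \<longleftrightarrow> JG d E = (IG d E :: (nat set, 'k) mpoly set)"
    by (rule part_a[OF assms]) (use c1 c2 c3 in blast)+
  show "prime_ideal_in (RG d E) (LG d E :: (nat set, 'k) mpoly set) \<longleftrightarrow> LG d E = (IG d E :: (nat set, 'k) mpoly set)"
    by (rule part_a[OF assms]) (use c1 c2 c3 in blast)+
  show "((IG d E :: (nat set, 'k) mpoly set) = IG2 d E \<longleftrightarrow> generated_by_quadratic_binomials d E (IG d E :: (nat set, 'k) mpoly set))"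
    by (rule part_b[OF assms])
  show "((IG2 d E :: (nat set, 'k) mpoly set) = JG d E \<longleftrightarrow> \<not> complement_has_triangle d E)"
    by (rule part_c[OF assms])
  show "((JG d E :: (nat set, 'k) mpoly set) = LG d E \<longleftrightarrow>
            (\<exists>P. complete_multipartite_wrt d E P \<and> (\<forall>V\<in>P. card V \<le> 3)))"
    by (rule part_d[OF assms])
qed

end
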